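(* Let $(M,g)$ be a Riemannian manifold of dimension $2n+1$ with scalar curvature $r$ and Ricci tensor $\mathrm{Ric}$, and suppose $(M,g)$ is a closed $(m,\rho)$-quasi-Einstein manifold with potential vector field $V$ and constants $\lambda,\rho\in\mathbb{R}$, $m>0$. Then for every vector field $X$ on $M$, \[ \frac{m-1}{m}\,\mathrm{Ric}(V,X) = \frac{2n\lambda+r(2n\rho -1)}{m}\,V^{\flat}(X) -\frac{4n\rho-1}{2}\,X(r). \]
   Context: A Riemannian manifold $(M,g)$ is an $(m,\rho)$-quasi-Einstein manifold if there exist a vector field $V$ (the potential vector field) and real constants $\lambda,\rho$ and a positive real $m$ such that $\frac12\mathcal{L}_V g+\mathrm{Ric}-\frac1m V^{\flat}\otimes V^{\flat}=(\lambda+\rho r)g$, where $\mathcal{L}_V$ is the Lie derivative, $r$ the scalar curvature and $V^\flat=g(V,\cdot)$ the 1-form metrically dual to $V$. It is called closed if $dV^{\flat}=0$. *)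

theory Defs
  imports "HOL-Analysis.Analysis"
begin

text \<open>Local (coordinate) Riemannian geometry on an open set U of real^'d.
  Index type 'd enumerates the coordinates; the dimension is CARD('d).\<close>

definition partial :: "'d::finite \<Rightarrow> (real^'d \<Rightarrow> real) \<Rightarrow> real^'d \<Rightarrow> real" where
  "partial i f x = frechet_derivative f (at x) (axis i 1)"

fun dpart :: "'d::finite list \<Rightarrow> (real^'d \<Rightarrow> real) \<Rightarrow> real^'d \<Rightarrow> real" where
  "dpart [] f = f"
| "dpart (i # is) f = partial i (dpart is f)"

definition smooth_on :: "(real^'d::finite) set \<Rightarrow> (real^'d \<Rightarrow> real) \<Rightarrow> bool" where
  "smooth_on U f \<longleftrightarrow> (\<forall>is. \<forall>x\<in>U. dpart is f differentiable (at x))"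

definition riemannian_metric :: "(real^'d::finite) set \<Rightarrow> ('d \<Rightarrow> 'd \<Rightarrow> real^'d \<Rightarrow> real) \<Rightarrow> bool" where
  "riemannian_metric U g \<longleftrightarrow> open U \<and> (\<forall>i j. smooth_on U (g i j))
     \<and> (\<forall>i j x. g i j x = g j i x)
     \<and> (\<forall>x\<in>U. \<forall>v::real^'d. v \<noteq> 0 \<longrightarrow> (\<Sum>i\<in>UNIV. \<Sum>j\<in>UNIV. v$i * g i j x * v$j) > 0)"

definition ginv :: "('d::finite \<Rightarrow> 'd \<Rightarrow> real^'d \<Rightarrow> real) \<Rightarrow> 'd \<Rightarrow> 'd \<Rightarrow> real^'d \<Rightarrow> real" where
  "ginv g i j x = matrix_inv ((\<chi> a b. g a b x) :: real^'d^'d) $ i $ j"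

definition christoffel :: "('d::finite \<Rightarrow> 'd \<Rightarrow> real^'d \<Rightarrow> real) \<Rightarrow> 'd \<Rightarrow> 'd \<Rightarrow> 'd \<Rightarrow> real^'d \<Rightarrow> real" where
  "christoffel g k i j x = (1/2) * (\<Sum>l\<in>UNIV. ginv g k l x *
      (partial i (g j l) x + partial j (g i l) x - partial l (g i j) x))"

definition ricci :: "('d::finite \<Rightarrow> 'd \<Rightarrow> real^'d \<Rightarrow> real) \<Rightarrow> 'd \<Rightarrow> 'd \<Rightarrow> real^'d \<Rightarrow> real" where
  "ricci g j k x = (\<Sum>i\<in>UNIV. partial i (christoffel g i j k) x - partial j (christoffel g i i k) x
      + (\<Sum>p\<in>UNIV. christoffel g i i p x * christoffel g p j k x
             - christoffel g i j p x * christoffel g p i k x))"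

definition scalar_curv :: "('d::finite \<Rightarrow> 'd \<Rightarrow> real^'d \<Rightarrow> real) \<Rightarrow> real^'d \<Rightarrow> real" where
  "scalar_curv g x = (\<Sum>j\<in>UNIV. \<Sum>k\<in>UNIV. ginv g j k x * ricci g j k x)"

definition flat :: "('d::finite \<Rightarrow> 'd \<Rightarrow> real^'d \<Rightarrow> real) \<Rightarrow> ('d \<Rightarrow> real^'d \<Rightarrow> real) \<Rightarrow> 'd \<Rightarrow> real^'d \<Rightarrow> real" where
  "flat g V i x = (\<Sum>k\<in>UNIV. g i k x * V k x)"

definition lie_metric :: "('d::finite \<Rightarrow> 'd \<Rightarrow> real^'d \<Rightarrow> real) \<Rightarrow> ('d \<Rightarrow> real^'d \<Rightarrow> real) \<Rightarrow> 'd \<Rightarrow> 'd \<Rightarrow> real^'d \<Rightarrow> real" where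
  "lie_metric g V i j x = (\<Sum>k\<in>UNIV. V k x * partial k (g i j) x
      + g k j x * partial i (V k) x + g i k x * partial j (V k) x)"

definition quasi_einstein ::
  "(real^'d::finite) set \<Rightarrow> ('d \<Rightarrow> 'd \<Rightarrow> real^'d \<Rightarrow> real) \<Rightarrow> ('d \<Rightarrow> real^'d \<Rightarrow> real)
     \<Rightarrow> real \<Rightarrow> real \<Rightarrow> real \<Rightarrow> bool" where
  "quasi_einstein U g V m lam rho \<longleftrightarrow> riemannian_metric U g \<and> (\<forall>k. smooth_on U (V k)) \<and> m > 0
     \<and> (\<forall>x\<in>U. \<forall>i j. (1/2) * lie_metric g V i j x + ricci g i j x - (1/m) * flat g V i x * flat g V j x
                   = (lam + rho * scalar_curv g x) * g i j x)"

definition closed_qe ::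
  "(real^'d::finite) set \<Rightarrow> ('d \<Rightarrow> 'd \<Rightarrow> real^'d \<Rightarrow> real) \<Rightarrow> ('d \<Rightarrow> real^'d \<Rightarrow> real)
     \<Rightarrow> real \<Rightarrow> real \<Rightarrow> real \<Rightarrow> bool" where
  "closed_qe U g V m lam rho \<longleftrightarrow> quasi_einstein U g V m lam rho
     \<and> (\<forall>x\<in>U. \<forall>i j. partial i (flat g V j) x = partial j (flat g V i) x)"

end

theory Submission
  imports Defs
begin

lemma partial_has:
  assumes "f differentiable (at x)"
  shows "(f has_derivative frechet_derivative f (at x)) (at x)"
  using assms frechet_derivative_works by blast

lemma partial_eqI:
  assumes "(f has_derivative f') (at x)"
  shows "partial i f x = f' (axis i 1)"
  unfolding partial_def using frechet_derivative_at[OF assms] by simp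

lemma partial_add:
  assumes "f differentiable (at x)" "g differentiable (at x)"
  shows "partial i (\<lambda>y. f y + g y) x = partial i f x + partial i g x"
proof -
  have "((\<lambda>y. f y + g y) has_derivative (\<lambda>h. frechet_derivative f (at x) h + frechet_derivative g (at x) h)) (at x)"
    using assms by (intro has_derivative_add partial_has)
  note d = this
  show ?thesis using partial_eqI[OF d, of i] unfolding partial_def by simp
qed

lemma partial_diff:
  assumes "f differentiable (at x)" "g differentiable (at x)"
  shows "partial i (\<lambda>y. f y - g y) x = partial i f x - partial i g x"
proof -
  have "((\<lambda>y. f y - g y) has_derivative (\<lambda>h. frechet_derivative f (at x) h - frechet_derivative g (at x) h)) (at x)"
    using assms by (intro has_derivative_diff partial_has)
  note d = this
  show ?thesis using partial_eqI[OF d, of i] unfolding partial_def by simp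
qed

lemma partial_mult:
  assumes "f differentiable (at x)" "g differentiable (at x)"
  shows "partial i (\<lambda>y. f y * g y) x = f x * partial i g x + partial i f x * g x"
proof -
  have "((\<lambda>y. f y * g y) has_derivative (\<lambda>h. f x * frechet_derivative g (at x) h + frechet_derivative f (at x) h * g x)) (at x)"
    using assms by (intro has_derivative_mult partial_has)
  note d = this
  show ?thesis using partial_eqI[OF d, of i] unfolding partial_def by simp
qed

lemma partial_const: "partial i (\<lambda>y. c) x = 0"
proof -
  have "((\<lambda>y::real^'a. c) has_derivative (\<lambda>h. 0)) (at x)" by (rule has_derivative_const)
  note d = this
  show ?thesis using partial_eqI[OF d, of i] by simp
qed

lemma partial_const_fun: "partial i (\<lambda>y. c) = (\<lambda>y. 0)"
  by (rule ext) (rule partial_const)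

lemma partial_cmult:
  assumes "f differentiable (at x)"
  shows "partial i (\<lambda>y. c * f y) x = c * partial i f x"
  using partial_mult[OF differentiable_const assms, of i c] by (simp add: partial_const)

lemma partial_sum:
  assumes "finite A" "\<And>k. k \<in> A \<Longrightarrow> F k differentiable (at x)"
  shows "partial i (\<lambda>y. \<Sum>k\<in>A. F k y) x = (\<Sum>k\<in>A. partial i (F k) x)"
proof -
  have "((\<lambda>y. \<Sum>k\<in>A. F k y) has_derivative (\<lambda>h. \<Sum>k\<in>A. frechet_derivative (F k) (at x) h)) (at x)"
    using assms by (intro has_derivative_sum partial_has) auto
  note d = this
  show ?thesis using partial_eqI[OF d, of i] unfolding partial_def by simp
qed

lemma partial_cong:
  assumes "open U" "x \<in> U" "\<And>y. y \<in> U \<Longrightarrow> f y = g y"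
  shows "partial i f x = partial i g x"
proof -
  have "\<And>f'. (f has_derivative f') (at x) = (g has_derivative f') (at x)"
    using assms has_derivative_transform_within_open by (metis)
  then have "frechet_derivative f (at x) = frechet_derivative g (at x)"
    unfolding frechet_derivative_def by simp
  then show ?thesis by (simp add: partial_def)
qed

lemma differentiable_cong:
  assumes "open U" "x \<in> U" "\<And>y. y \<in> U \<Longrightarrow> f y = g y" "f differentiable (at x)"
  shows "g differentiable (at x)"
  using assms has_derivative_transform_within_open unfolding differentiable_def by metis

lemma dpart_snoc: "dpart (is @ [i]) f = dpart is (partial i f)"
  by (induction "is") auto

lemma smooth_iff:
  "smooth_on U f \<longleftrightarrow> (\<forall>x\<in>U. f differentiable (at x)) \<and> (\<forall>i. smooth_on U (partial i f))"
proof
  assume "smooth_on U f"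
  then show "(\<forall>x\<in>U. f differentiable (at x)) \<and> (\<forall>i. smooth_on U (partial i f))"
    unfolding smooth_on_def by (metis dpart.simps(1) dpart_snoc)
next
  assume a: "(\<forall>x\<in>U. f differentiable (at x)) \<and> (\<forall>i. smooth_on U (partial i f))"
  show "smooth_on U f" unfolding smooth_on_def
  proof (intro allI ballI)
    fix "is" x assume "x \<in> U"
    show "dpart is f differentiable (at x)"
    proof (cases "is" rule: rev_cases)
      case Nil then show ?thesis using a \<open>x\<in>U\<close> by simp
    next
      case (snoc js i) then show ?thesis using a \<open>x\<in>U\<close> unfolding smooth_on_def
        by (simp add: dpart_snoc)
    qed
  qed
qed

inductive_set SC :: "(real^'d::finite) set \<Rightarrow> (real^'d \<Rightarrow> real) set" for U where
  base: "smooth_on U f \<Longrightarrow> f \<in> SC U"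
| const: "(\<lambda>x. c) \<in> SC U"
| add: "f \<in> SC U \<Longrightarrow> g \<in> SC U \<Longrightarrow> (\<lambda>x. f x + g x) \<in> SC U"
| mult: "f \<in> SC U \<Longrightarrow> g \<in> SC U \<Longrightarrow> (\<lambda>x. f x * g x) \<in> SC U"
| inv: "f \<in> SC U \<Longrightarrow> (\<forall>x\<in>U. f x \<noteq> 0) \<Longrightarrow> (\<lambda>x. inverse (f x)) \<in> SC U"
| cong: "f \<in> SC U \<Longrightarrow> (\<forall>x\<in>U. f x = g x) \<Longrightarrow> g \<in> SC U"

lemma SC_step:
  assumes "open U" "f \<in> SC U"
  shows "(\<forall>x\<in>U. f differentiable (at x)) \<and> (\<forall>i. partial i f \<in> SC U)"
  using assms(2)
proof induction
  case (base f)
  then show ?case using smooth_iff SC.base by blast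
next
  case (const c)
  show ?case using SC.const[of 0 U] by (simp add: partial_const_fun)
next
  case (add f g)
  have "partial i (\<lambda>x. f x + g x) \<in> SC U" for i
    by (rule SC.cong[OF SC.add[of "partial i f" U "partial i g"]])
       (use add assms(1) in \<open>auto simp: partial_add\<close>)
  then show ?case using add by auto
next
  case (mult f g)
  have "partial i (\<lambda>x. f x * g x) \<in> SC U" for i
    by (rule SC.cong[OF SC.add[OF SC.mult[of f U "partial i g"] SC.mult[of "partial i f" U g]]])
       (use mult assms(1) in \<open>auto simp: partial_mult\<close>)
  then show ?case using mult by auto
next
  case (inv f)
  have d: "(\<lambda>x. inverse (f x)) differentiable (at x)" if "x \<in> U" for x
  proof -
    have "f differentiable (at x)" using inv.IH that by blast
    then obtain D where dD: "(f has_derivative D) (at x)" unfolding differentiable_def by blast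
    have nz: "f x \<noteq> 0" using inv.hyps(2) that by blast
    have "((\<lambda>x. inverse (f x)) has_derivative (\<lambda>h. - (inverse (f x) * D h * inverse (f x)))) (at x)"
      by (rule Deriv.has_derivative_inverse[OF nz dD])
    then show ?thesis unfolding differentiable_def by blast
  qed
  have "partial i (\<lambda>x. inverse (f x)) \<in> SC U" for i
  proof (rule SC.cong[OF SC.mult[OF SC.const[of "-1"] SC.mult[OF SC.mult[OF SC.inv[OF inv.hyps(1) inv.hyps(2)] inv.IH[THEN conjunct2, rule_format, of i]] SC.inv[OF inv.hyps(1) inv.hyps(2)]]]], intro ballI)
    fix x assume "x \<in> U"
    have "((\<lambda>x. inverse (f x)) has_derivative (\<lambda>h. - (inverse (f x) * frechet_derivative f (at x) h * inverse (f x)))) (at x)"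
      using inv.IH inv.hyps(2) \<open>x\<in>U\<close> by (intro Deriv.has_derivative_inverse partial_has) auto
    note d = this
    show "-1 * (inverse (f x) * partial i f x * inverse (f x)) = partial i (\<lambda>x. inverse (f x)) x"
      using partial_eqI[OF d, of i] unfolding partial_def by simp
  qed
  then show ?case using d by auto
next
  case (cong f g)
  have "g differentiable (at x)" if "x \<in> U" for x
    using differentiable_cong[OF assms(1) that, of f g] cong that by auto
  moreover have "partial i g \<in> SC U" for i
  proof (rule SC.cong[of "partial i f" U "partial i g"])
    show "partial i f \<in> SC U" using cong by blast
    show "\<forall>x\<in>U. partial i f x = partial i g x"
      using partial_cong[OF assms(1), of _ f g i] cong(2) by blast
  qed
  ultimately show ?case by blast
qed

lemma SC_dpart: "open U \<Longrightarrow> f \<in> SC U \<Longrightarrow> dpart is f \<in> SC U"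
  by (induction "is" arbitrary: f) (auto dest: SC_step)

lemma SC_smooth: "open U \<Longrightarrow> f \<in> SC U \<Longrightarrow> smooth_on U f"
  unfolding smooth_on_def using SC_dpart SC_step by blast

lemma SC_diff: "open U \<Longrightarrow> f \<in> SC U \<Longrightarrow> x \<in> U \<Longrightarrow> f differentiable (at x)"
  using SC_step by blast

lemma SC_partial: "open U \<Longrightarrow> f \<in> SC U \<Longrightarrow> partial i f \<in> SC U"
  using SC_step by blast

lemma SC_minus: "f \<in> SC U \<Longrightarrow> (\<lambda>x. - f x) \<in> SC U"
  by (rule SC.cong[OF SC.mult[OF SC.const[of "-1"]]]) auto

lemma SC_diff': "f \<in> SC U \<Longrightarrow> g \<in> SC U \<Longrightarrow> (\<lambda>x. f x - g x) \<in> SC U"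
  by (rule SC.cong[OF SC.add[of f U "\<lambda>x. - g x"]]) (auto intro: SC_minus)

lemma SC_divide: "f \<in> SC U \<Longrightarrow> g \<in> SC U \<Longrightarrow> (\<forall>x\<in>U. g x \<noteq> 0) \<Longrightarrow> (\<lambda>x. f x / g x) \<in> SC U"
  by (rule SC.cong[OF SC.mult[OF _ SC.inv]]) (auto simp: field_simps)

lemma SC_sum: "finite A \<Longrightarrow> (\<And>k. k \<in> A \<Longrightarrow> F k \<in> SC U) \<Longrightarrow> (\<lambda>x. \<Sum>k\<in>A. F k x) \<in> SC U"
  by (induction A rule: finite_induct) (auto intro: SC.const SC.add)

lemma SC_prod: "finite A \<Longrightarrow> (\<And>k. k \<in> A \<Longrightarrow> F k \<in> SC U) \<Longrightarrow> (\<lambda>x. \<Prod>k\<in>A. F k x) \<in> SC U"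
  by (induction A rule: finite_induct) (auto intro: SC.const SC.mult)

lemma line_has_deriv:
  assumes "f differentiable (at (y + t *\<^sub>R v))"
  shows "((\<lambda>s. f (y + s *\<^sub>R v)) has_derivative (\<lambda>h. h * frechet_derivative f (at (y + t *\<^sub>R v)) v)) (at t)"
proof -
  have "((\<lambda>s. y + s *\<^sub>R v) has_derivative (\<lambda>h. h *\<^sub>R v)) (at t)"
    by (auto intro!: derivative_eq_intros)
  from has_derivative_compose[OF this partial_has[OF assms]]
  have d: "((\<lambda>s. f (y + s *\<^sub>R v)) has_derivative (\<lambda>h. frechet_derivative f (at (y + t *\<^sub>R v)) (h *\<^sub>R v))) (at t)" .
  have "bounded_linear (frechet_derivative f (at (y + t *\<^sub>R v)))"
    using partial_has[OF assms] has_derivative_bounded_linear by blast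
  then have "frechet_derivative f (at (y + t *\<^sub>R v)) (h *\<^sub>R v) = h * frechet_derivative f (at (y + t *\<^sub>R v)) v" for h
    by (simp add: linear_simps(5) bounded_linear.linear)
  with d show ?thesis by simp
qed

lemma line_has_deriv_partial:
  assumes "f differentiable (at (y + t *\<^sub>R axis i 1))"
  shows "((\<lambda>s. f (y + s *\<^sub>R axis i 1)) has_derivative (\<lambda>h. h * partial i f (y + t *\<^sub>R axis i 1))) (at t)"
  using line_has_deriv[OF assms] by (simp add: partial_def)

lemma norm_two_axis:
  fixes s u :: real
  assumes "0 \<le> s" "0 \<le> u"
  shows "norm (s *\<^sub>R axis i (1::real) + u *\<^sub>R axis j (1::real) :: real^'d) \<le> s + u"
proof -
  have "norm (s *\<^sub>R axis i (1::real) + u *\<^sub>R axis j 1 :: real^'d) \<le> norm (s *\<^sub>R axis i (1::real) :: real^'d) + norm (u *\<^sub>R axis j (1::real) :: real^'d)"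
    by (rule norm_triangle_ineq)
  also have "\<dots> = s + u" using assms by simp
  finally show ?thesis .
qed

lemma smooth_diff2:
  assumes "smooth_on U f" "x \<in> U"
  shows "f differentiable (at x)" "partial i f differentiable (at x)"
    "partial j (partial i f) differentiable (at x)"
proof -
  have a: "smooth_on U (partial i f)" "smooth_on U (partial j (partial i f))"
    using assms(1) smooth_iff by metis+
  show "f differentiable (at x)" using assms smooth_iff by metis
  show "partial i f differentiable (at x)" using a(1) assms(2) smooth_iff by metis
  show "partial j (partial i f) differentiable (at x)" using a(2) assms(2) smooth_iff by metis
qed

lemma mixed_mvt:
  fixes f :: "real^'d::finite \<Rightarrow> real"
  assumes U: "ball x r \<subseteq> U" and sm: "smooth_on U f" and h: "0 < h" "2 * h < r"
  shows "\<exists>\<xi>. dist \<xi> x < 2 * h \<and>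
     f (x + h *\<^sub>R axis i 1 + h *\<^sub>R axis j 1) - f (x + h *\<^sub>R axis i 1) - f (x + h *\<^sub>R axis j 1) + f x
       = h * h * partial j (partial i f) \<xi>"
proof -
  let ?ei = "axis i (1::real) :: real^'d" and ?ej = "axis j (1::real) :: real^'d"
  have inU: "x + s *\<^sub>R ?ei + u *\<^sub>R ?ej \<in> U" if "0 \<le> s" "s \<le> h" "0 \<le> u" "u \<le> h" for s u
  proof -
    have "norm (s *\<^sub>R ?ei + u *\<^sub>R ?ej) \<le> s + u" using norm_two_axis that by blast
    then have "dist (x + s *\<^sub>R ?ei + u *\<^sub>R ?ej) x < r" using that h
      by (simp add: dist_norm add.assoc)
    then show ?thesis using U by (auto simp: dist_commute)
  qed
  define \<phi> where "\<phi> t = f ((x + h *\<^sub>R ?ej) + t *\<^sub>R ?ei) - f (x + t *\<^sub>R ?ei)" for t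
  have "(\<phi> has_derivative (\<lambda>k. k * (partial i f ((x + h *\<^sub>R ?ej) + t *\<^sub>R ?ei) - partial i f (x + t *\<^sub>R ?ei)))) (at t within {0..h})"
    if "0 \<le> t" "t \<le> h" for t
  proof -
    have p1: "(x + h *\<^sub>R ?ej) + t *\<^sub>R ?ei \<in> U" using inU[of t h] that h by (simp add: algebra_simps)
    have p0: "x + t *\<^sub>R ?ei \<in> U" using inU[of t 0] that h by simp
    have d1: "((\<lambda>t. f ((x + h *\<^sub>R ?ej) + t *\<^sub>R ?ei)) has_derivative (\<lambda>k. k * partial i f ((x + h *\<^sub>R ?ej) + t *\<^sub>R ?ei))) (at t)"
      by (rule line_has_deriv_partial[OF smooth_diff2(1)[OF sm p1]])
    have d0: "((\<lambda>t. f (x + t *\<^sub>R ?ei)) has_derivative (\<lambda>k. k * partial i f (x + t *\<^sub>R ?ei))) (at t)"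
      by (rule line_has_deriv_partial[OF smooth_diff2(1)[OF sm p0]])
    have "(\<phi> has_derivative (\<lambda>k. k * partial i f ((x + h *\<^sub>R ?ej) + t *\<^sub>R ?ei) - k * partial i f (x + t *\<^sub>R ?ei))) (at t)"
      unfolding \<phi>_def by (rule has_derivative_diff[OF d1 d0])
    moreover have "(\<lambda>k. k * partial i f ((x + h *\<^sub>R ?ej) + t *\<^sub>R ?ei) - k * partial i f (x + t *\<^sub>R ?ei))
       = (\<lambda>k. k * (partial i f ((x + h *\<^sub>R ?ej) + t *\<^sub>R ?ei) - partial i f (x + t *\<^sub>R ?ei)))"
      by (simp add: fun_eq_iff right_diff_distrib)
    ultimately show ?thesis by (metis has_derivative_at_withinI)
  qed
  from mvt_simple[OF h(1) this]
  obtain s where s: "0 < s" "s < h"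
    and e1: "\<phi> h - \<phi> 0 = (h - 0) * (partial i f ((x + h *\<^sub>R ?ej) + s *\<^sub>R ?ei) - partial i f (x + s *\<^sub>R ?ei))"
    by auto
  define \<psi> where "\<psi> u = partial i f ((x + s *\<^sub>R ?ei) + u *\<^sub>R ?ej)" for u
  have "(\<psi> has_derivative (\<lambda>k. k * partial j (partial i f) ((x + s *\<^sub>R ?ei) + u *\<^sub>R ?ej))) (at u within {0..h})"
    if "0 \<le> u" "u \<le> h" for u
  proof -
    have p: "(x + s *\<^sub>R ?ei) + u *\<^sub>R ?ej \<in> U" using inU[of s u] that s by simp
    show ?thesis unfolding \<psi>_def
      by (rule has_derivative_at_withinI[OF line_has_deriv_partial[OF smooth_diff2(2)[OF sm p]]])
  qed
  from mvt_simple[OF h(1) this]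
  obtain u where u: "0 < u" "u < h"
    and e2: "\<psi> h - \<psi> 0 = (h - 0) * partial j (partial i f) ((x + s *\<^sub>R ?ei) + u *\<^sub>R ?ej)"
    by auto
  have "dist ((x + s *\<^sub>R ?ei) + u *\<^sub>R ?ej) x < 2 * h"
  proof -
    have "norm (s *\<^sub>R ?ei + u *\<^sub>R ?ej) \<le> s + u" by (rule norm_two_axis) (use s u in auto)
    then show ?thesis using s u by (simp add: dist_norm add.assoc)
  qed
  moreover have "f (x + h *\<^sub>R ?ei + h *\<^sub>R ?ej) - f (x + h *\<^sub>R ?ei) - f (x + h *\<^sub>R ?ej) + f x = \<phi> h - \<phi> 0"
    unfolding \<phi>_def by (simp add: algebra_simps)
  moreover have "(x + h *\<^sub>R ?ej) + s *\<^sub>R ?ei = (x + s *\<^sub>R ?ei) + h *\<^sub>R ?ej" by (simp add: algebra_simps)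
  ultimately show ?thesis using e1 e2 unfolding \<psi>_def by (intro exI[of _ "(x + s *\<^sub>R ?ei) + u *\<^sub>R ?ej"]) (simp add: algebra_simps)
qed

lemma schwarz:
  fixes f :: "real^'d::finite \<Rightarrow> real"
  assumes "open U" "x \<in> U" "smooth_on U f"
  shows "partial i (partial j f) x = partial j (partial i f) x"
proof (rule ccontr)
  let ?F = "partial j (partial i f)" and ?G = "partial i (partial j f)"
  assume ne: "?G x \<noteq> ?F x"
  define e where "e = \<bar>?G x - ?F x\<bar> / 2"
  have e: "e > 0" using ne by (simp add: e_def)
  have cF: "isCont ?F x" "isCont ?G x"
    using smooth_diff2[OF assms(3,2)] differentiable_imp_continuous_within by blast+
  obtain d1 where d1: "d1 > 0" "\<And>y. dist y x < d1 \<Longrightarrow> dist (?F y) (?F x) < e"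
    using cF(1) e unfolding continuous_at_eps_delta by blast
  obtain d2 where d2: "d2 > 0" "\<And>y. dist y x < d2 \<Longrightarrow> dist (?G y) (?G x) < e"
    using cF(2) e unfolding continuous_at_eps_delta by blast
  obtain r where r: "r > 0" "ball x r \<subseteq> U" using assms openE by blast
  define h where "h = min r (min d1 d2) / 4"
  have h: "0 < h" "2 * h < r" "2 * h < d1" "2 * h < d2" using r d1 d2 by (auto simp: h_def)
  obtain \<xi> where \<xi>: "dist \<xi> x < 2 * h"
    "f (x + h *\<^sub>R axis i 1 + h *\<^sub>R axis j 1) - f (x + h *\<^sub>R axis i 1) - f (x + h *\<^sub>R axis j 1) + f x = h * h * ?F \<xi>"
    using mixed_mvt[OF r(2) assms(3) h(1,2)] by blast
  obtain \<eta> where \<eta>: "dist \<eta> x < 2 * h"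
    "f (x + h *\<^sub>R axis j 1 + h *\<^sub>R axis i 1) - f (x + h *\<^sub>R axis j 1) - f (x + h *\<^sub>R axis i 1) + f x = h * h * ?G \<eta>"
    using mixed_mvt[OF r(2) assms(3) h(1,2), of j i] by blast
  have "h * h * ?F \<xi> = h * h * ?G \<eta>" using \<xi>(2) \<eta>(2) by (simp add: algebra_simps)
  then have eq: "?F \<xi> = ?G \<eta>" using h(1) by simp
  have "dist (?F \<xi>) (?F x) < e" using d1 \<xi>(1) h by auto
  moreover have "dist (?G \<eta>) (?G x) < e" using d2 \<eta>(1) h by auto
  ultimately have "\<bar>?G x - ?F x\<bar> < 2 * e" using eq by (simp add: dist_real_def)
  then show False by (simp add: e_def)
qed

definition Gm :: "('d::finite \<Rightarrow> 'd \<Rightarrow> real^'d \<Rightarrow> real) \<Rightarrow> real^'d \<Rightarrow> real^'d^'d" where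
  "Gm g x = (\<chi> a b. g a b x)"

lemma posdef_ker:
  fixes A :: "real^'d::finite^'d"
  assumes "\<forall>v::real^'d. v \<noteq> 0 \<longrightarrow> (\<Sum>i\<in>UNIV. \<Sum>j\<in>UNIV. v$i * A$i$j * v$j) > 0"
  shows "\<forall>v. A *v v = 0 \<longrightarrow> v = 0"
proof (intro allI impI)
  fix v assume "A *v v = 0"
  then have "(A *v v) $ i = 0" for i by simp
  then have s0: "(\<Sum>j\<in>UNIV. A$i$j * v$j) = 0" for i
    by (simp add: matrix_vector_mult_def)
  have "(\<Sum>i\<in>UNIV. \<Sum>j\<in>UNIV. v$i * A$i$j * v$j) = (\<Sum>i\<in>UNIV. v$i * (\<Sum>j\<in>UNIV. A$i$j * v$j))"
    by (simp add: mult.assoc sum_distrib_left)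
  also have "\<dots> = 0" by (simp add: s0)
  finally have z: "(\<Sum>i\<in>UNIV. \<Sum>j\<in>UNIV. v$i * A$i$j * v$j) = 0" .
  show "v = 0"
  proof (rule ccontr)
    assume "v \<noteq> 0"
    then have "(\<Sum>i\<in>UNIV. \<Sum>j\<in>UNIV. v$i * A$i$j * v$j) > 0" using assms by blast
    then show False using z by simp
  qed
qed

lemma posdef_invertible:
  fixes A :: "real^'d::finite^'d"
  assumes "\<forall>v::real^'d. v \<noteq> 0 \<longrightarrow> (\<Sum>i\<in>UNIV. \<Sum>j\<in>UNIV. v$i * A$i$j * v$j) > 0"
  shows "A ** matrix_inv A = mat 1" "matrix_inv A ** A = mat 1" "det A \<noteq> 0"
proof -
  obtain B where B: "B ** A = mat 1" using posdef_ker[OF assms] matrix_left_invertible_ker by blast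
  then have "A ** B = mat 1" using matrix_left_right_inverse by blast
  then have inv: "invertible A" using B unfolding invertible_def by blast
  then have "A ** matrix_inv A = mat 1 \<and> matrix_inv A ** A = mat 1"
    unfolding invertible_def matrix_inv_def by (rule someI_ex)
  then show "A ** matrix_inv A = mat 1" "matrix_inv A ** A = mat 1" by auto
  show "det A \<noteq> 0" using inv invertible_det_nz by blast
qed

lemma inv_unique:
  fixes A B C :: "real^'d::finite^'d"
  assumes "B ** A = mat 1" "A ** C = mat 1"
  shows "B = C"
  by (metis assms matrix_mul_assoc matrix_mul_lid matrix_mul_rid)

lemma posdef_inv_sym:
  fixes A :: "real^'d::finite^'d"
  assumes "\<forall>v::real^'d. v \<noteq> 0 \<longrightarrow> (\<Sum>i\<in>UNIV. \<Sum>j\<in>UNIV. v$i * A$i$j * v$j) > 0"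
    and "transpose A = A"
  shows "transpose (matrix_inv A) = matrix_inv A"
proof -
  have "transpose (matrix_inv A) ** A = mat 1"
    using posdef_invertible(1)[OF assms(1)] assms(2)
    by (metis matrix_transpose_mul transpose_mat)
  then show ?thesis using inv_unique posdef_invertible(1)[OF assms(1)] by blast
qed

lemma inv_cramer:
  fixes A :: "real^'d::finite^'d"
  assumes "A ** matrix_inv A = mat 1" "det A \<noteq> 0"
  shows "matrix_inv A $ k $ j = det (\<chi> a c. if c = k then axis j 1 $ a else A$a$c) / det A"
proof -
  have "A *v (matrix_inv A *v axis j 1) = axis j 1"
    by (simp add: matrix_vector_mul_assoc assms(1))
  then have "matrix_inv A *v axis j 1 = (\<chi> k. det (\<chi> a c. if c = k then axis j 1 $ a else A$a$c) / det A)"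
    using cramer[OF assms(2)] by blast
  moreover have "(matrix_inv A *v axis j 1) $ k = matrix_inv A $ k $ j"
    by (simp add: matrix_vector_mult_def axis_def if_distrib cong: if_cong)
  ultimately show ?thesis by simp
qed

lemma SC_det:
  fixes M :: "'d::finite \<Rightarrow> 'd \<Rightarrow> real^'e::finite \<Rightarrow> real"
  assumes "\<And>a b. M a b \<in> SC U"
  shows "(\<lambda>x. det (\<chi> a b. M a b x)) \<in> SC U"
proof -
  have "(\<lambda>x. \<Sum>p\<in>{p. p permutes (UNIV::'d set)}. of_int (sign p) * (\<Prod>i\<in>UNIV. M i (p i) x)) \<in> SC U"
    apply (rule SC_sum)
     apply (simp add: finite_permutations)
    apply (rule SC.mult[OF SC.const])
    apply (rule SC_prod)
     apply simp
    apply (rule assms)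
    done
  then show ?thesis by (rule SC.cong) (simp add: det_def)
qed

locale rmetric =
  fixes U :: "(real^'d::finite) set" and g :: "'d \<Rightarrow> 'd \<Rightarrow> real^'d \<Rightarrow> real"
  assumes rm: "riemannian_metric U g"
begin

lemma U_open: "open U" using rm unfolding riemannian_metric_def by blast
lemma g_sym: "g i j x = g j i x" using rm unfolding riemannian_metric_def by blast
lemma g_smooth: "smooth_on U (g i j)" using rm unfolding riemannian_metric_def by blast
lemma g_SC: "g i j \<in> SC U" using g_smooth by (rule SC.base)

lemma Gm_posdef: "x \<in> U \<Longrightarrow> \<forall>v::real^'d. v \<noteq> 0 \<longrightarrow> (\<Sum>i\<in>UNIV. \<Sum>j\<in>UNIV. v$i * Gm g x$i$j * v$j) > 0"
  using rm unfolding riemannian_metric_def Gm_def by simp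

lemma Gm_sym: "transpose (Gm g x) = Gm g x"
  by (simp add: Gm_def transpose_def g_sym vec_eq_iff)

lemma ginv_sym: "x \<in> U \<Longrightarrow> ginv g i j x = ginv g j i x"
proof -
  assume x: "x \<in> U"
  have e: "transpose (matrix_inv (Gm g x)) = matrix_inv (Gm g x)"
    by (rule posdef_inv_sym[OF Gm_posdef[OF x] Gm_sym])
  have "transpose (matrix_inv (Gm g x)) $ j $ i = matrix_inv (Gm g x) $ j $ i" by (simp only: e)
  then show ?thesis by (simp add: transpose_def ginv_def Gm_def)
qed

lemma ginv_left: "x \<in> U \<Longrightarrow> (\<Sum>l\<in>UNIV. ginv g i l x * g l j x) = (if i = j then 1 else 0)"
proof -
  assume x: "x \<in> U"
  have "(matrix_inv (Gm g x) ** Gm g x) $ i $ j = mat 1 $ i $ j"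
    using posdef_invertible(2)[OF Gm_posdef[OF x]] by simp
  then show ?thesis by (simp add: matrix_matrix_mult_def mat_def ginv_def Gm_def)
qed

lemma ginv_right: "x \<in> U \<Longrightarrow> (\<Sum>l\<in>UNIV. g i l x * ginv g l j x) = (if i = j then 1 else 0)"
proof -
  assume x: "x \<in> U"
  have "(Gm g x ** matrix_inv (Gm g x)) $ i $ j = mat 1 $ i $ j"
    using posdef_invertible(1)[OF Gm_posdef[OF x]] by simp
  then show ?thesis by (simp add: matrix_matrix_mult_def mat_def ginv_def Gm_def)
qed

lemma ginv_SC: "ginv g i j \<in> SC U"
proof (rule SC.cong[OF SC_divide[OF SC_det SC_det]])
  show "(\<lambda>x. if c = i then axis j 1 $ a else g a c x) \<in> SC U" for a c
    by (cases "c = i") (simp_all add: SC.const g_SC)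
  show "g a c \<in> SC U" for a c by (rule g_SC)
  show "\<forall>x\<in>U. det (\<chi> a b. g a b x) \<noteq> 0"
    using posdef_invertible(3)[OF Gm_posdef] unfolding Gm_def by blast
  show "\<forall>x\<in>U. det (\<chi> a b. if b = i then axis j 1 $ a else g a b x) / det (\<chi> a b. g a b x) = ginv g i j x"
  proof
    fix x assume x: "x \<in> U"
    have "ginv g i j x = det (\<chi> a c. if c = i then axis j 1 $ a else Gm g x $a$c) / det (Gm g x)"
      unfolding ginv_def Gm_def[symmetric] by (rule inv_cramer[OF posdef_invertible(1,3)[OF Gm_posdef[OF x]]])
    then show "det (\<chi> a b. if b = i then axis j 1 $ a else g a b x) / det (\<chi> a b. g a b x) = ginv g i j x"
      by (simp add: Gm_def cong: if_cong)
  qed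
qed

end

lemma sum_delta_r: "(\<Sum>l\<in>UNIV. A l * (if l = j then 1 else 0)) = (A j :: real)" for A :: "'a::finite \<Rightarrow> real"
proof -
  have "(\<Sum>l\<in>UNIV. A l * (if l = j then 1 else 0)) = (\<Sum>l\<in>UNIV. if l = j then A l else 0)"
    by (rule sum.cong) auto
  then show ?thesis by (simp add: sum.delta')
qed

lemma sum_delta_l: "(\<Sum>l\<in>UNIV. (if j = l then 1 else 0) * A l) = (A j :: real)" for A :: "'a::finite \<Rightarrow> real"
proof -
  have "(\<Sum>l\<in>UNIV. (if j = l then 1 else 0) * A l) = (\<Sum>l\<in>UNIV. if j = l then A l else 0)"
    by (rule sum.cong) auto
  then show ?thesis by (simp add: sum.delta)
qed

context rmetric
begin

abbreviation H where "H \<equiv> ginv g"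
abbreviation Gam where "Gam \<equiv> christoffel g"

definition Gl :: "'d \<Rightarrow> 'd \<Rightarrow> 'd \<Rightarrow> real^'d \<Rightarrow> real" where
  "Gl l i j x = (1/2) * (partial i (g j l) x + partial j (g i l) x - partial l (g i j) x)"

lemma g_fun_sym: "g i j = g j i" using g_sym by (rule ext)

lemma Gam_Gl: "Gam k i j x = (\<Sum>l\<in>UNIV. H k l x * Gl l i j x)"
  unfolding christoffel_def Gl_def by (simp add: sum_distrib_left mult_ac)

lemma Gl_sym: "Gl l i j x = Gl l j i x"
  unfolding Gl_def by (simp add: g_fun_sym[of i j] algebra_simps)

lemma Gam_sym: "Gam k i j x = Gam k j i x"
  unfolding Gam_Gl by (simp add: Gl_sym[of _ i j])

lemma Gam_fun_sym: "Gam k i j = Gam k j i"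
  by (rule ext) (rule Gam_sym)

lemma H_SC: "H i j \<in> SC U" by (rule ginv_SC)

lemma pg_SC: "partial a (g i j) \<in> SC U" by (rule SC_partial[OF U_open g_SC])

lemma Gl_SC: "Gl l i j \<in> SC U"
  unfolding Gl_def[abs_def]
  by (intro SC.mult SC.const SC_diff' SC.add pg_SC)

lemma Gam_SC: "Gam k i j \<in> SC U"
proof -
  have "(\<lambda>x. \<Sum>l\<in>UNIV. H k l x * Gl l i j x) \<in> SC U"
    by (rule SC_sum) (simp_all add: SC.mult H_SC Gl_SC)
  then show ?thesis by (rule SC.cong) (simp add: Gam_Gl)
qed

lemma dg_Gl: "partial a (g i j) x = Gl j a i x + Gl i a j x"
  unfolding Gl_def by (simp add: g_fun_sym[of j i] algebra_simps)

lemma lower_Gam: "x \<in> U \<Longrightarrow> (\<Sum>d\<in>UNIV. g q d x * Gam d c e x) = Gl q c e x"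
proof -
  assume x: "x \<in> U"
  have "(\<Sum>d\<in>UNIV. g q d x * Gam d c e x) = (\<Sum>d\<in>UNIV. \<Sum>l\<in>UNIV. g q d x * H d l x * Gl l c e x)"
    by (simp add: Gam_Gl sum_distrib_left mult_ac)
  also have "\<dots> = (\<Sum>l\<in>UNIV. (\<Sum>d\<in>UNIV. g q d x * H d l x) * Gl l c e x)"
    by (subst sum.swap) (simp add: sum_distrib_right)
  also have "\<dots> = Gl q c e x"
    by (simp add: ginv_right[OF x] sum_delta_l)
  finally show ?thesis .
qed

lemma metric_compat: "x \<in> U \<Longrightarrow>
  partial a (g i j) x = (\<Sum>p\<in>UNIV. Gam p a i x * g p j x) + (\<Sum>p\<in>UNIV. Gam p a j x * g i p x)"
proof -
  assume x: "x \<in> U"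
  have "(\<Sum>p\<in>UNIV. Gam p a i x * g p j x) = Gl j a i x"
    using lower_Gam[OF x, of j a i] by (simp add: g_sym[of _ j] mult_ac)
  moreover have "(\<Sum>p\<in>UNIV. Gam p a j x * g i p x) = Gl i a j x"
    using lower_Gam[OF x, of i a j] by (simp add: mult_ac)
  ultimately show ?thesis by (simp add: dg_Gl)
qed

lemma dH: "x \<in> U \<Longrightarrow>
  partial a (H i j) x = - (\<Sum>p\<in>UNIV. Gam i a p x * H p j x) - (\<Sum>p\<in>UNIV. Gam j a p x * H i p x)"
proof -
  assume x: "x \<in> U"
  have dfx: "\<And>f. f \<in> SC U \<Longrightarrow> f differentiable (at x)" using SC_diff[OF U_open] x by blast
  \<comment> \<open>differentiate H g = I\<close>
  have z: "(\<Sum>l\<in>UNIV. H i l x * partial a (g l k) x + partial a (H i l) x * g l k x) = 0" for k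
  proof -
    have "partial a (\<lambda>y. \<Sum>l\<in>UNIV. H i l y * g l k y) x = partial a (\<lambda>y. if i = k then 1 else 0) x"
      by (rule partial_cong[OF U_open x]) (simp add: ginv_left)
    also have "\<dots> = 0" by (simp add: partial_const)
    finally have "partial a (\<lambda>y. \<Sum>l\<in>UNIV. H i l y * g l k y) x = 0" .
    moreover have "partial a (\<lambda>y. \<Sum>l\<in>UNIV. H i l y * g l k y) x
        = (\<Sum>l\<in>UNIV. H i l x * partial a (g l k) x + partial a (H i l) x * g l k x)"
      by (subst partial_sum) (auto intro!: dfx SC.mult H_SC g_SC simp: partial_mult dfx H_SC g_SC)
    ultimately show ?thesis by simp
  qed
  have "partial a (H i j) x = (\<Sum>l\<in>UNIV. partial a (H i l) x * (\<Sum>k\<in>UNIV. g l k x * H k j x))"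
    by (simp add: ginv_right[OF x] sum_delta_r)
  also have "\<dots> = (\<Sum>k\<in>UNIV. (\<Sum>l\<in>UNIV. partial a (H i l) x * g l k x) * H k j x)"
    by (simp add: sum_distrib_left sum_distrib_right mult_ac) (rule sum.swap)
  also have "\<dots> = (\<Sum>k\<in>UNIV. - (\<Sum>l\<in>UNIV. H i l x * partial a (g l k) x) * H k j x)"
  proof (rule sum.cong[OF refl])
    fix k
    have "(\<Sum>l\<in>UNIV. partial a (H i l) x * g l k x) = - (\<Sum>l\<in>UNIV. H i l x * partial a (g l k) x)"
      using z[of k] by (simp add: sum.distrib eq_neg_iff_add_eq_0 add.commute)
    then show "(\<Sum>l\<in>UNIV. partial a (H i l) x * g l k x) * H k j x = - (\<Sum>l\<in>UNIV. H i l x * partial a (g l k) x) * H k j x"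
      by simp
  qed
  also have "\<dots> = - (\<Sum>k\<in>UNIV. \<Sum>l\<in>UNIV. H i l x * (Gl k a l x + Gl l a k x) * H k j x)"
    by (simp add: dg_Gl sum_distrib_right sum_negf)
  also have "\<dots> = - (\<Sum>l\<in>UNIV. H i l x * (\<Sum>k\<in>UNIV. H j k x * Gl k a l x))
                  - (\<Sum>k\<in>UNIV. (\<Sum>l\<in>UNIV. H i l x * Gl l a k x) * H k j x)"
  proof -
    have "(\<Sum>k\<in>UNIV. \<Sum>l\<in>UNIV. H i l x * (Gl k a l x + Gl l a k x) * H k j x)
      = (\<Sum>k\<in>UNIV. \<Sum>l\<in>UNIV. H i l x * Gl k a l x * H k j x) + (\<Sum>k\<in>UNIV. \<Sum>l\<in>UNIV. H i l x * Gl l a k x * H k j x)"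
      by (simp add: algebra_simps sum.distrib)
    also have "(\<Sum>k\<in>UNIV. \<Sum>l\<in>UNIV. H i l x * Gl k a l x * H k j x) = (\<Sum>l\<in>UNIV. H i l x * (\<Sum>k\<in>UNIV. H j k x * Gl k a l x))"
      by (subst sum.swap) (simp add: sum_distrib_left ginv_sym[OF x, of k j for k] mult_ac)
    also have "(\<Sum>k\<in>UNIV. \<Sum>l\<in>UNIV. H i l x * Gl l a k x * H k j x) = (\<Sum>k\<in>UNIV. (\<Sum>l\<in>UNIV. H i l x * Gl l a k x) * H k j x)"
      by (simp add: sum_distrib_right)
    finally show ?thesis by simp
  qed
  also have "\<dots> = - (\<Sum>p\<in>UNIV. Gam i a p x * H p j x) - (\<Sum>p\<in>UNIV. Gam j a p x * H i p x)"
    by (simp add: Gam_Gl mult_ac)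
  finally show ?thesis .
qed

end

context rmetric
begin

lemma dfx: "f \<in> SC U \<Longrightarrow> x \<in> U \<Longrightarrow> f differentiable (at x)"
  using SC_diff[OF U_open] by blast

definition Rm :: "'d \<Rightarrow> 'd \<Rightarrow> 'd \<Rightarrow> 'd \<Rightarrow> real^'d \<Rightarrow> real" where
  "Rm d e b c x = partial b (Gam d c e) x - partial c (Gam d b e) x
     + (\<Sum>p\<in>UNIV. Gam d b p x * Gam p c e x - Gam d c p x * Gam p b e x)"

lemma ricci_Rm: "ricci g j k x = (\<Sum>i\<in>UNIV. Rm i k i j x)"
  unfolding ricci_def Rm_def by simp

lemma Rm_anti: "Rm d e b c x = - Rm d e c b x"
  unfolding Rm_def by (simp add: sum_subtractf algebra_simps)

lemma pGam_SC: "partial a (Gam k i j) \<in> SC U" by (rule SC_partial[OF U_open Gam_SC])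

lemma Rm_SC: "Rm d e b c \<in> SC U"
proof -
  have "(\<lambda>x. partial b (Gam d c e) x - partial c (Gam d b e) x
     + (\<Sum>p\<in>UNIV. Gam d b p x * Gam p c e x - Gam d c p x * Gam p b e x)) \<in> SC U"
    by (intro SC.add SC_diff' pGam_SC SC_sum) (auto intro: SC_diff' SC.mult Gam_SC)
  then show ?thesis unfolding Rm_def[abs_def] .
qed

lemma ricci_SC: "ricci g j k \<in> SC U"
proof -
  have "(\<lambda>x. \<Sum>i\<in>UNIV. Rm i k i j x) \<in> SC U" by (rule SC_sum) (auto intro: Rm_SC)
  then show ?thesis by (rule SC.cong) (simp add: ricci_Rm)
qed

lemma s1: "x \<in> U \<Longrightarrow> (\<Sum>d\<in>UNIV. g q d x * partial b (Gam d c e) x)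
   = partial b (Gl q c e) x - (\<Sum>d\<in>UNIV. (Gl d b q x + Gl q b d x) * Gam d c e x)"
proof -
  assume x: "x \<in> U"
  have "partial b (\<lambda>y. \<Sum>d\<in>UNIV. g q d y * Gam d c e y) x = partial b (Gl q c e) x"
    by (rule partial_cong[OF U_open x]) (simp add: lower_Gam)
  moreover have "partial b (\<lambda>y. \<Sum>d\<in>UNIV. g q d y * Gam d c e y) x
     = (\<Sum>d\<in>UNIV. g q d x * partial b (Gam d c e) x + partial b (g q d) x * Gam d c e x)"
    by (subst partial_sum) (auto intro!: dfx SC.mult g_SC Gam_SC x simp: partial_mult dfx g_SC Gam_SC x)
  ultimately show ?thesis by (simp add: sum.distrib dg_Gl)
qed

lemma s2: "x \<in> U \<Longrightarrow> (\<Sum>d\<in>UNIV. g q d x * (\<Sum>p\<in>UNIV. Gam d b p x * Gam p c e x))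
   = (\<Sum>p\<in>UNIV. Gl q b p x * Gam p c e x)"
proof -
  assume x: "x \<in> U"
  have "(\<Sum>d\<in>UNIV. g q d x * (\<Sum>p\<in>UNIV. Gam d b p x * Gam p c e x))
      = (\<Sum>d\<in>UNIV. \<Sum>p\<in>UNIV. g q d x * (Gam d b p x * Gam p c e x))"
    by (simp add: sum_distrib_left)
  also have "\<dots> = (\<Sum>p\<in>UNIV. \<Sum>d\<in>UNIV. g q d x * (Gam d b p x * Gam p c e x))"
    by (rule sum.swap)
  also have "\<dots> = (\<Sum>p\<in>UNIV. (\<Sum>d\<in>UNIV. g q d x * Gam d b p x) * Gam p c e x)"
    by (simp add: sum_distrib_right mult.assoc)
  finally have "(\<Sum>d\<in>UNIV. g q d x * (\<Sum>p\<in>UNIV. Gam d b p x * Gam p c e x))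
      = (\<Sum>p\<in>UNIV. (\<Sum>d\<in>UNIV. g q d x * Gam d b p x) * Gam p c e x)" .
  then show ?thesis by (simp add: lower_Gam[OF x])
qed

lemma lowRm: "x \<in> U \<Longrightarrow> (\<Sum>d\<in>UNIV. g q d x * Rm d e b c x)
   = partial b (Gl q c e) x - partial c (Gl q b e) x
     - (\<Sum>d\<in>UNIV. Gl d b q x * Gam d c e x) + (\<Sum>d\<in>UNIV. Gl d c q x * Gam d b e x)"
proof -
  assume x: "x \<in> U"
  have "(\<Sum>d\<in>UNIV. g q d x * Rm d e b c x)
     = (\<Sum>d\<in>UNIV. g q d x * partial b (Gam d c e) x) - (\<Sum>d\<in>UNIV. g q d x * partial c (Gam d b e) x)
       + (\<Sum>d\<in>UNIV. g q d x * (\<Sum>p\<in>UNIV. Gam d b p x * Gam p c e x))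
       - (\<Sum>d\<in>UNIV. g q d x * (\<Sum>p\<in>UNIV. Gam d c p x * Gam p b e x))"
    unfolding Rm_def by (simp add: ring_distribs sum.distrib sum_subtractf)
  also have "\<dots> = partial b (Gl q c e) x - (\<Sum>d\<in>UNIV. (Gl d b q x + Gl q b d x) * Gam d c e x)
       - (partial c (Gl q b e) x - (\<Sum>d\<in>UNIV. (Gl d c q x + Gl q c d x) * Gam d b e x))
       + (\<Sum>p\<in>UNIV. Gl q b p x * Gam p c e x) - (\<Sum>p\<in>UNIV. Gl q c p x * Gam p b e x)"
    by (simp only: s1[OF x] s2[OF x])
  also have "\<dots> = partial b (Gl q c e) x - partial c (Gl q b e) x
     - (\<Sum>d\<in>UNIV. Gl d b q x * Gam d c e x) + (\<Sum>d\<in>UNIV. Gl d c q x * Gam d b e x)"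
    by (simp add: ring_distribs sum.distrib)
  finally show ?thesis .
qed

lemma P_sym: "x \<in> U \<Longrightarrow> (\<Sum>d\<in>UNIV. Gl d b q x * Gam d c e x) = (\<Sum>d\<in>UNIV. Gl d c e x * Gam d b q x)"
proof -
  assume x: "x \<in> U"
  have "(\<Sum>d\<in>UNIV. Gl d b q x * Gam d c e x) = (\<Sum>d\<in>UNIV. \<Sum>l\<in>UNIV. Gl d b q x * H d l x * Gl l c e x)"
    by (simp add: Gam_Gl sum_distrib_left mult_ac)
  also have "\<dots> = (\<Sum>l\<in>UNIV. \<Sum>d\<in>UNIV. Gl d b q x * H d l x * Gl l c e x)"
    by (rule sum.swap)
  also have "\<dots> = (\<Sum>l\<in>UNIV. Gl l c e x * Gam l b q x)"
    by (simp add: Gam_Gl sum_distrib_left mult_ac ginv_sym[OF x])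
  finally show ?thesis .
qed

lemma dGl_pair: "x \<in> U \<Longrightarrow> partial b (Gl q c e) x + partial b (Gl e c q) x = partial b (partial c (g e q)) x"
proof -
  assume x: "x \<in> U"
  have "partial b (\<lambda>y. Gl q c e y + Gl e c q y) x = partial b (partial c (g e q)) x"
    by (rule partial_cong[OF U_open x]) (simp add: dg_Gl)
  then show ?thesis by (simp add: partial_add dfx Gl_SC x)
qed

lemma Rm_metric_anti: "x \<in> U \<Longrightarrow> (\<Sum>d\<in>UNIV. g q d x * Rm d e b c x) + (\<Sum>d\<in>UNIV. g e d x * Rm d q b c x) = 0"
proof -
  assume x: "x \<in> U"
  have sw: "partial b (partial c (g e q)) x = partial c (partial b (g e q)) x"
    by (rule schwarz[OF U_open x g_smooth])
  have "(\<Sum>d\<in>UNIV. g q d x * Rm d e b c x) + (\<Sum>d\<in>UNIV. g e d x * Rm d q b c x)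
    = (partial b (Gl q c e) x + partial b (Gl e c q) x) - (partial c (Gl q b e) x + partial c (Gl e b q) x)
      - (\<Sum>d\<in>UNIV. Gl d b q x * Gam d c e x) + (\<Sum>d\<in>UNIV. Gl d c q x * Gam d b e x)
      - (\<Sum>d\<in>UNIV. Gl d b e x * Gam d c q x) + (\<Sum>d\<in>UNIV. Gl d c e x * Gam d b q x)"
    by (simp add: lowRm[OF x])
  also have "\<dots> = 0"
    using P_sym[OF x, of b q c e] P_sym[OF x, of c q b e] dGl_pair[OF x, of b q c e] dGl_pair[OF x, of c q b e] sw
    by simp
  finally show ?thesis .
qed

lemma Z: "x \<in> U \<Longrightarrow> (\<Sum>e\<in>UNIV. \<Sum>a\<in>UNIV. H e a x * Rm d e c a x) = (\<Sum>q\<in>UNIV. H d q x * ricci g c q x)"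
proof -
  assume x: "x \<in> U"
  have r1: "Rm d e c a x = - (\<Sum>q\<in>UNIV. H d q x * (\<Sum>l\<in>UNIV. g e l x * Rm l q c a x))" for e a
  proof -
    have "Rm d e c a x = (\<Sum>q\<in>UNIV. H d q x * (\<Sum>l\<in>UNIV. g q l x * Rm l e c a x))"
    proof -
      have "(\<Sum>q\<in>UNIV. H d q x * (\<Sum>l\<in>UNIV. g q l x * Rm l e c a x))
          = (\<Sum>l\<in>UNIV. (\<Sum>q\<in>UNIV. H d q x * g q l x) * Rm l e c a x)"
        by (simp add: sum_distrib_left sum_distrib_right mult_ac) (rule sum.swap)
      also have "\<dots> = Rm d e c a x" by (simp add: ginv_left[OF x] sum_delta_l)
      finally show ?thesis by simp
    qed
    also have "\<dots> = (\<Sum>q\<in>UNIV. H d q x * (- (\<Sum>l\<in>UNIV. g e l x * Rm l q c a x)))"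
    proof (rule sum.cong[OF refl])
      fix q
      have "(\<Sum>l\<in>UNIV. g q l x * Rm l e c a x) = - (\<Sum>l\<in>UNIV. g e l x * Rm l q c a x)"
        using Rm_metric_anti[OF x, of q e c a] by (simp add: eq_neg_iff_add_eq_0)
      then show "H d q x * (\<Sum>l\<in>UNIV. g q l x * Rm l e c a x) = H d q x * (- (\<Sum>l\<in>UNIV. g e l x * Rm l q c a x))"
        by simp
    qed
    finally show ?thesis by (simp add: sum_negf)
  qed
  have "(\<Sum>e\<in>UNIV. \<Sum>a\<in>UNIV. H e a x * Rm d e c a x)
      = - (\<Sum>q\<in>UNIV. H d q x * (\<Sum>a\<in>UNIV. \<Sum>l\<in>UNIV. (\<Sum>e\<in>UNIV. H a e x * g e l x) * Rm l q c a x))"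
  proof -
    have "(\<Sum>e\<in>UNIV. \<Sum>a\<in>UNIV. H e a x * Rm d e c a x)
       = - (\<Sum>e\<in>UNIV. \<Sum>a\<in>UNIV. \<Sum>q\<in>UNIV. \<Sum>l\<in>UNIV. H d q x * (H a e x * g e l x * Rm l q c a x))"
      by (simp add: r1 sum_distrib_left sum_negf ginv_sym[OF x, of e a for e a] mult_ac)
    also have "\<dots> = - (\<Sum>q\<in>UNIV. \<Sum>a\<in>UNIV. \<Sum>l\<in>UNIV. \<Sum>e\<in>UNIV. H d q x * (H a e x * g e l x * Rm l q c a x))"
    proof -
      have "(\<Sum>e\<in>UNIV. \<Sum>a\<in>UNIV. \<Sum>q\<in>UNIV. \<Sum>l\<in>UNIV. F e a q l) = (\<Sum>q\<in>UNIV. \<Sum>a\<in>UNIV. \<Sum>l\<in>UNIV. \<Sum>e\<in>UNIV. F e a q l)"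
        for F :: "'d \<Rightarrow> 'd \<Rightarrow> 'd \<Rightarrow> 'd \<Rightarrow> real"
      proof -
        have "(\<Sum>e\<in>UNIV. \<Sum>a\<in>UNIV. \<Sum>q\<in>UNIV. \<Sum>l\<in>UNIV. F e a q l) = (\<Sum>a\<in>UNIV. \<Sum>e\<in>UNIV. \<Sum>q\<in>UNIV. \<Sum>l\<in>UNIV. F e a q l)"
          by (rule sum.swap)
        also have "\<dots> = (\<Sum>a\<in>UNIV. \<Sum>q\<in>UNIV. \<Sum>e\<in>UNIV. \<Sum>l\<in>UNIV. F e a q l)"
          by (rule sum.cong[OF refl], rule sum.swap)
        also have "\<dots> = (\<Sum>a\<in>UNIV. \<Sum>q\<in>UNIV. \<Sum>l\<in>UNIV. \<Sum>e\<in>UNIV. F e a q l)"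
          by (rule sum.cong[OF refl], rule sum.cong[OF refl], rule sum.swap)
        also have "\<dots> = (\<Sum>q\<in>UNIV. \<Sum>a\<in>UNIV. \<Sum>l\<in>UNIV. \<Sum>e\<in>UNIV. F e a q l)"
          by (rule sum.swap)
        finally show ?thesis .
      qed
      then show ?thesis by simp
    qed
    also have "\<dots> = - (\<Sum>q\<in>UNIV. H d q x * (\<Sum>a\<in>UNIV. \<Sum>l\<in>UNIV. (\<Sum>e\<in>UNIV. H a e x * g e l x) * Rm l q c a x))"
      by (simp add: sum_distrib_left sum_distrib_right mult_ac)
    finally show ?thesis .
  qed
  also have "\<dots> = - (\<Sum>q\<in>UNIV. H d q x * (\<Sum>a\<in>UNIV. Rm a q c a x))"
    by (simp add: ginv_left[OF x] sum_delta_l)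
  also have "\<dots> = (\<Sum>q\<in>UNIV. H d q x * ricci g c q x)"
    by (simp add: ricci_Rm Rm_anti[of _ _ c] sum_negf)
  finally show ?thesis .
qed

end

context rmetric
begin

lemma diffs:
  assumes x: "x \<in> U"
  shows "Gam k i j differentiable (at x)" "partial a (Gam k i j) differentiable (at x)"
    "Rm d e b c differentiable (at x)" "H i j differentiable (at x)" "g i j differentiable (at x)"
    "ricci g i j differentiable (at x)" "Gl l i j differentiable (at x)"
  by (auto intro!: dfx x Gam_SC pGam_SC Rm_SC H_SC g_SC ricci_SC Gl_SC)

lemma dRm: "x \<in> U \<Longrightarrow> partial a (Rm d e b c) x =
   partial a (partial b (Gam d c e)) x - partial a (partial c (Gam d b e)) x
   + (\<Sum>p\<in>UNIV. Gam d b p x * partial a (Gam p c e) x + partial a (Gam d b p) x * Gam p c e x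
       - (Gam d c p x * partial a (Gam p b e) x + partial a (Gam d c p) x * Gam p b e x))"
  unfolding Rm_def[abs_def]
  by (simp add: partial_add partial_diff partial_sum partial_mult diffs)

definition CRm :: "'d \<Rightarrow> 'd \<Rightarrow> 'd \<Rightarrow> 'd \<Rightarrow> 'd \<Rightarrow> real^'d \<Rightarrow> real" where
  "CRm a d e b c x = partial a (Rm d e b c) x
     + (\<Sum>p\<in>UNIV. Gam d a p x * Rm p e b c x - Gam p a e x * Rm d p b c x
                 - Gam p a b x * Rm d e p c x - Gam p a c x * Rm d e b p x)"

lemma RmB: "(\<Sum>p\<in>UNIV. Gam d a p x * Rm p e b c x) =
   (\<Sum>p\<in>UNIV. Gam d a p x * (partial b (Gam p c e) x - partial c (Gam p b e) x))
   + (\<Sum>p\<in>UNIV. \<Sum>q\<in>UNIV. Gam d a p x * Gam p b q x * Gam q c e x)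
   - (\<Sum>p\<in>UNIV. \<Sum>q\<in>UNIV. Gam d a p x * Gam p c q x * Gam q b e x)"
  unfolding Rm_def by (simp add: ring_distribs sum.distrib sum_subtractf sum_distrib_left mult.assoc)

lemma swap2: "(\<Sum>p\<in>UNIV. \<Sum>q\<in>UNIV. F p q) = (\<Sum>p\<in>UNIV. \<Sum>q\<in>UNIV. (F q p :: real))"
  by (rule sum.swap)

lemma RmC: "(\<Sum>p\<in>UNIV. Gam p a e x * Rm d p b c x) =
   (\<Sum>p\<in>UNIV. Gam p a e x * (partial b (Gam d c p) x - partial c (Gam d b p) x))
   + (\<Sum>p\<in>UNIV. \<Sum>q\<in>UNIV. Gam d b p x * Gam p c q x * Gam q a e x)
   - (\<Sum>p\<in>UNIV. \<Sum>q\<in>UNIV. Gam d c p x * Gam p b q x * Gam q a e x)"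
proof -
  have "(\<Sum>p\<in>UNIV. Gam p a e x * Rm d p b c x) =
   (\<Sum>p\<in>UNIV. Gam p a e x * (partial b (Gam d c p) x - partial c (Gam d b p) x))
   + (\<Sum>p\<in>UNIV. \<Sum>q\<in>UNIV. Gam q a e x * (Gam d b p x * Gam p c q x))
   - (\<Sum>p\<in>UNIV. \<Sum>q\<in>UNIV. Gam q a e x * (Gam d c p x * Gam p b q x))"
    unfolding Rm_def
    by (simp add: ring_distribs sum.distrib sum_subtractf sum_distrib_left swap2[where F = "\<lambda>p q. Gam p a e x * (Gam d b q x * Gam q c p x)"]
          swap2[where F = "\<lambda>p q. Gam p a e x * (Gam d c q x * Gam q b p x)"])
  then show ?thesis by (simp add: mult_ac)
qed


definition XX :: "'d \<Rightarrow> 'd \<Rightarrow> 'd \<Rightarrow> 'd \<Rightarrow> 'd \<Rightarrow> real^'d \<Rightarrow> real" where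
  "XX d e u v w x = (\<Sum>p\<in>UNIV. \<Sum>q\<in>UNIV. Gam d u p x * Gam p v q x * Gam q w e x)"

definition T1 :: "'d \<Rightarrow> 'd \<Rightarrow> 'd \<Rightarrow> 'd \<Rightarrow> 'd \<Rightarrow> 'd \<Rightarrow> real^'d \<Rightarrow> real" where
  "T1 d e a b c p x = Gam d b p x * partial a (Gam p c e) x + partial a (Gam d b p) x * Gam p c e x
       - (Gam d c p x * partial a (Gam p b e) x + partial a (Gam d c p) x * Gam p b e x)
       + Gam d a p x * (partial b (Gam p c e) x - partial c (Gam p b e) x)
       - Gam p a e x * (partial b (Gam d c p) x - partial c (Gam d b p) x)
       - Gam p a b x * Rm d e p c x - Gam p a c x * Rm d e b p x"

lemma CRm_exp: "x \<in> U \<Longrightarrow> CRm a d e b c x =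
   partial a (partial b (Gam d c e)) x - partial a (partial c (Gam d b e)) x
   + (\<Sum>p\<in>UNIV. T1 d e a b c p x)
   + XX d e a b c x - XX d e a c b x - XX d e b c a x + XX d e c b a x"
proof -
  assume x: "x \<in> U"
  have e1: "CRm a d e b c x = partial a (Rm d e b c) x
     + (\<Sum>p\<in>UNIV. Gam d a p x * Rm p e b c x) - (\<Sum>p\<in>UNIV. Gam p a e x * Rm d p b c x)
     - (\<Sum>p\<in>UNIV. Gam p a b x * Rm d e p c x) - (\<Sum>p\<in>UNIV. Gam p a c x * Rm d e b p x)"
    unfolding CRm_def by (simp add: sum_subtractf)
  have e2: "(\<Sum>p\<in>UNIV. T1 d e a b c p x) =
      (\<Sum>p\<in>UNIV. Gam d b p x * partial a (Gam p c e) x + partial a (Gam d b p) x * Gam p c e x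
       - (Gam d c p x * partial a (Gam p b e) x + partial a (Gam d c p) x * Gam p b e x))
     + (\<Sum>p\<in>UNIV. Gam d a p x * (partial b (Gam p c e) x - partial c (Gam p b e) x))
     - (\<Sum>p\<in>UNIV. Gam p a e x * (partial b (Gam d c p) x - partial c (Gam d b p) x))
     - (\<Sum>p\<in>UNIV. Gam p a b x * Rm d e p c x) - (\<Sum>p\<in>UNIV. Gam p a c x * Rm d e b p x)"
    unfolding T1_def by (simp only: sum.distrib sum_subtractf)
  show ?thesis
    using e1 e2 dRm[OF x, of a d e b c] RmB[where d=d and a=a and e=e and b=b and c=c and x=x] RmC[where d=d and a=a and e=e and b=b and c=c and x=x]
    unfolding XX_def by linarith
qed

lemma T1_cyc: "T1 d e a b c p x + T1 d e b c a p x + T1 d e c a b p x = 0"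
proof -
  have r: "Gam p a c x = Gam p c a x" "Gam p b a x = Gam p a b x" "Gam p c b x = Gam p b c x"
     "Rm d e b p x = - Rm d e p b x" "Rm d e c p x = - Rm d e p c x" "Rm d e a p x = - Rm d e p a x"
    by (simp_all add: Gam_sym[of p] Rm_anti[of d e _ p])
  show ?thesis unfolding T1_def r by (simp add: algebra_simps)
qed

lemma bianchi2: "x \<in> U \<Longrightarrow> CRm a d e b c x + CRm b d e c a x + CRm c d e a b x = 0"
proof -
  assume x: "x \<in> U"
  have sm: "smooth_on U (Gam k i j)" for k i j by (rule SC_smooth[OF U_open Gam_SC])
  have sw: "partial u (partial v (Gam k i j)) x = partial v (partial u (Gam k i j)) x" for u v k i j
    by (rule schwarz[OF U_open x sm])
  have t: "(\<Sum>p\<in>UNIV. T1 d e a b c p x) + (\<Sum>p\<in>UNIV. T1 d e b c a p x) + (\<Sum>p\<in>UNIV. T1 d e c a b p x) = 0"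
    by (simp add: sum.distrib[symmetric] T1_cyc)
  show ?thesis
    using CRm_exp[OF x, of a d e b c] CRm_exp[OF x, of b d e c a] CRm_exp[OF x, of c d e a b] t
      sw[of a b d c e] sw[of b c d a e] sw[of c a d b e]
    by linarith
qed

end

lemma rev3: "(\<Sum>a\<in>UNIV. \<Sum>b\<in>UNIV. \<Sum>c\<in>UNIV. F a b c) = (\<Sum>c\<in>UNIV. \<Sum>b\<in>UNIV. \<Sum>a\<in>UNIV. (F a b c :: real))"
proof -
  have "(\<Sum>a\<in>UNIV. \<Sum>b\<in>UNIV. \<Sum>c\<in>UNIV. F a b c) = (\<Sum>b\<in>UNIV. \<Sum>a\<in>UNIV. \<Sum>c\<in>UNIV. F a b c)"
    by (rule sum.swap)
  also have "\<dots> = (\<Sum>b\<in>UNIV. \<Sum>c\<in>UNIV. \<Sum>a\<in>UNIV. F a b c)"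
    by (rule sum.cong[OF refl], rule sum.swap)
  also have "\<dots> = (\<Sum>c\<in>UNIV. \<Sum>b\<in>UNIV. \<Sum>a\<in>UNIV. F a b c)"
    by (rule sum.swap)
  finally show ?thesis .
qed

lemma sw23: "(\<Sum>a\<in>UNIV. \<Sum>b\<in>UNIV. \<Sum>c\<in>UNIV. F a b c) = (\<Sum>a\<in>UNIV. \<Sum>c\<in>UNIV. \<Sum>b\<in>UNIV. (F a b c :: real))"
  by (rule sum.cong[OF refl], rule sum.swap)

context rmetric
begin

definition cov2 :: "('d \<Rightarrow> 'd \<Rightarrow> real^'d \<Rightarrow> real) \<Rightarrow> 'd \<Rightarrow> 'd \<Rightarrow> 'd \<Rightarrow> real^'d \<Rightarrow> real" where
  "cov2 T a i j x = partial a (T i j) x - (\<Sum>p\<in>UNIV. Gam p a i x * T p j x) - (\<Sum>p\<in>UNIV. Gam p a j x * T i p x)"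

lemma trace_lemma:
  assumes x: "x \<in> U" and T: "\<And>i j. T i j \<in> SC U"
  shows "partial c (\<lambda>y. \<Sum>a\<in>UNIV. \<Sum>e\<in>UNIV. H a e y * T a e y) x = (\<Sum>a\<in>UNIV. \<Sum>e\<in>UNIV. H a e x * cov2 T c a e x)"
proof -
  have dT: "T i j differentiable (at x)" for i j using dfx[OF T x] .
  have "partial c (\<lambda>y. \<Sum>a\<in>UNIV. \<Sum>e\<in>UNIV. H a e y * T a e y) x
      = (\<Sum>a\<in>UNIV. \<Sum>e\<in>UNIV. H a e x * partial c (T a e) x + partial c (H a e) x * T a e x)"
    by (simp add: partial_sum partial_mult diffs[OF x] dT)
  also have "\<dots> = (\<Sum>a\<in>UNIV. \<Sum>e\<in>UNIV. H a e x * partial c (T a e) x)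
      - (\<Sum>a\<in>UNIV. \<Sum>e\<in>UNIV. \<Sum>p\<in>UNIV. Gam a c p x * H p e x * T a e x)
      - (\<Sum>a\<in>UNIV. \<Sum>e\<in>UNIV. \<Sum>p\<in>UNIV. Gam e c p x * H a p x * T a e x)"
    by (simp add: dH[OF x] sum.distrib sum_subtractf ring_distribs sum_distrib_right sum_negf)
  also have "(\<Sum>a\<in>UNIV. \<Sum>e\<in>UNIV. \<Sum>p\<in>UNIV. Gam a c p x * H p e x * T a e x)
      = (\<Sum>a\<in>UNIV. \<Sum>e\<in>UNIV. \<Sum>p\<in>UNIV. H a e x * (Gam p c a x * T p e x))"
    by (subst rev3) (simp add: mult_ac Gam_sym[of _ c])
  also have "(\<Sum>a\<in>UNIV. \<Sum>e\<in>UNIV. \<Sum>p\<in>UNIV. Gam e c p x * H a p x * T a e x)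
      = (\<Sum>a\<in>UNIV. \<Sum>e\<in>UNIV. \<Sum>p\<in>UNIV. H a e x * (Gam p c e x * T a p x))"
    by (subst sw23) (simp add: mult_ac Gam_sym[of _ c])
  finally show ?thesis
    unfolding cov2_def by (simp add: ring_distribs sum.distrib sum_subtractf sum_distrib_left)
qed

lemma CRm_anti: "x \<in> U \<Longrightarrow> CRm a d e b c x = - CRm a d e c b x"
proof -
  assume x: "x \<in> U"
  have f: "Rm d e b c = (\<lambda>y. - Rm d e c b y)" by (rule ext) (rule Rm_anti)
  have "partial a (Rm d e b c) x = - partial a (Rm d e c b) x"
    unfolding f using partial_cmult[OF diffs(3)[OF x], of a "-1" d e c b] by simp
  then show ?thesis unfolding CRm_def
    using Rm_anti[of d e p c x for p] Rm_anti[of d e b p x for p]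
      Rm_anti[of d p c b x for p] Rm_anti[of p e c b x for p]
    by (simp add: sum_negf[symmetric] algebra_simps)
qed

end

context rmetric
begin

lemma ricci_fun: "ricci g c e = (\<lambda>y. \<Sum>i\<in>UNIV. Rm i e i c y)"
  by (rule ext) (rule ricci_Rm)

lemma C1: "x \<in> U \<Longrightarrow> (\<Sum>d\<in>UNIV. CRm a d e d c x) = cov2 (ricci g) a c e x"
proof -
  assume x: "x \<in> U"
  have e0: "(\<Sum>d\<in>UNIV. partial a (Rm d e d c) x) = partial a (ricci g c e) x"
    unfolding ricci_fun by (simp add: partial_sum diffs[OF x])
  have e1: "(\<Sum>d\<in>UNIV. CRm a d e d c x) = (\<Sum>d\<in>UNIV. partial a (Rm d e d c) x)
     + (\<Sum>d\<in>UNIV. \<Sum>p\<in>UNIV. Gam d a p x * Rm p e d c x) - (\<Sum>d\<in>UNIV. \<Sum>p\<in>UNIV. Gam p a e x * Rm d p d c x)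
     - (\<Sum>d\<in>UNIV. \<Sum>p\<in>UNIV. Gam p a d x * Rm d e p c x) - (\<Sum>d\<in>UNIV. \<Sum>p\<in>UNIV. Gam p a c x * Rm d e d p x)"
    unfolding CRm_def by (simp add: sum.distrib sum_subtractf)
  have e2: "(\<Sum>d\<in>UNIV. \<Sum>p\<in>UNIV. Gam p a d x * Rm d e p c x) = (\<Sum>d\<in>UNIV. \<Sum>p\<in>UNIV. Gam d a p x * Rm p e d c x)"
    by (rule sum.swap)
  have e3: "(\<Sum>d\<in>UNIV. \<Sum>p\<in>UNIV. Gam p a e x * Rm d p d c x) = (\<Sum>p\<in>UNIV. Gam p a e x * ricci g c p x)"
    by (subst sum.swap) (simp add: ricci_Rm sum_distrib_left)
  have e4: "(\<Sum>d\<in>UNIV. \<Sum>p\<in>UNIV. Gam p a c x * Rm d e d p x) = (\<Sum>p\<in>UNIV. Gam p a c x * ricci g p e x)"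
    by (subst sum.swap) (simp add: ricci_Rm sum_distrib_left)
  show ?thesis unfolding cov2_def using e0 e1 e2 e3 e4 by linarith
qed

lemma C2: "x \<in> U \<Longrightarrow> (\<Sum>d\<in>UNIV. CRm c d e a d x) = - cov2 (ricci g) c a e x"
proof -
  assume x: "x \<in> U"
  have "(\<Sum>d\<in>UNIV. CRm c d e a d x) = (\<Sum>d\<in>UNIV. - CRm c d e d a x)"
    by (rule sum.cong[OF refl]) (rule CRm_anti[OF x])
  then show ?thesis by (simp add: sum_negf C1[OF x])
qed

lemma C3: "x \<in> U \<Longrightarrow> (\<Sum>e\<in>UNIV. \<Sum>a\<in>UNIV. H e a x * CRm d d e c a x) = (\<Sum>q\<in>UNIV. H d q x * cov2 (ricci g) d c q x)"
proof -
  assume x: "x \<in> U"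
  define A1 where "A1 = (\<Sum>e\<in>UNIV. \<Sum>a\<in>UNIV. \<Sum>p\<in>UNIV. H e a x * (Gam d d p x * Rm p e c a x))"
  define A2 where "A2 = (\<Sum>e\<in>UNIV. \<Sum>a\<in>UNIV. \<Sum>p\<in>UNIV. H e a x * (Gam p d e x * Rm d p c a x))"
  define A3 where "A3 = (\<Sum>e\<in>UNIV. \<Sum>a\<in>UNIV. \<Sum>p\<in>UNIV. H e a x * (Gam p d c x * Rm d e p a x))"
  define A4 where "A4 = (\<Sum>e\<in>UNIV. \<Sum>a\<in>UNIV. \<Sum>p\<in>UNIV. H e a x * (Gam p d a x * Rm d e c p x))"
  have L: "(\<Sum>e\<in>UNIV. \<Sum>a\<in>UNIV. H e a x * CRm d d e c a x)
      = (\<Sum>e\<in>UNIV. \<Sum>a\<in>UNIV. H e a x * partial d (Rm d e c a) x) + A1 - A2 - A3 - A4"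
    unfolding CRm_def A1_def A2_def A3_def A4_def
    by (simp add: ring_distribs sum.distrib sum_subtractf sum_distrib_left)
  have ZD: "(\<Sum>e\<in>UNIV. \<Sum>a\<in>UNIV. H e a x * partial d (Rm d e c a) x + partial d (H e a) x * Rm d e c a x)
     = (\<Sum>q\<in>UNIV. H d q x * partial d (ricci g c q) x + partial d (H d q) x * ricci g c q x)"
  proof -
    have "partial d (\<lambda>y. \<Sum>e\<in>UNIV. \<Sum>a\<in>UNIV. H e a y * Rm d e c a y) x
        = partial d (\<lambda>y. \<Sum>q\<in>UNIV. H d q y * ricci g c q y) x"
      by (rule partial_cong[OF U_open x]) (simp add: Z)
    then show ?thesis by (simp add: partial_sum partial_mult diffs[OF x])
  qed
  have dHR: "(\<Sum>e\<in>UNIV. \<Sum>a\<in>UNIV. partial d (H e a) x * Rm d e c a x) = - A2 - A4"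
  proof -
    have "(\<Sum>e\<in>UNIV. \<Sum>a\<in>UNIV. partial d (H e a) x * Rm d e c a x)
       = - (\<Sum>e\<in>UNIV. \<Sum>a\<in>UNIV. \<Sum>p\<in>UNIV. Gam e d p x * H p a x * Rm d e c a x)
         - (\<Sum>e\<in>UNIV. \<Sum>a\<in>UNIV. \<Sum>p\<in>UNIV. Gam a d p x * H e p x * Rm d e c a x)"
      by (simp add: dH[OF x] ring_distribs sum.distrib sum_subtractf sum_distrib_right sum_negf)
    also have "(\<Sum>e\<in>UNIV. \<Sum>a\<in>UNIV. \<Sum>p\<in>UNIV. Gam e d p x * H p a x * Rm d e c a x) = A2"
      unfolding A2_def by (subst rev3) (simp add: mult_ac Gam_sym[of _ d])
    also have "(\<Sum>e\<in>UNIV. \<Sum>a\<in>UNIV. \<Sum>p\<in>UNIV. Gam a d p x * H e p x * Rm d e c a x) = A4"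
      unfolding A4_def by (subst sw23) (simp add: mult_ac Gam_sym[of _ d])
    finally show ?thesis by simp
  qed
  have A1e: "A1 = (\<Sum>p\<in>UNIV. Gam d d p x * (\<Sum>q\<in>UNIV. H p q x * ricci g c q x))"
  proof -
    have "A1 = (\<Sum>p\<in>UNIV. \<Sum>a\<in>UNIV. \<Sum>e\<in>UNIV. H e a x * (Gam d d p x * Rm p e c a x))"
      unfolding A1_def by (rule rev3)
    also have "\<dots> = (\<Sum>p\<in>UNIV. \<Sum>e\<in>UNIV. \<Sum>a\<in>UNIV. H e a x * (Gam d d p x * Rm p e c a x))"
      by (rule sum.cong[OF refl], rule sum.swap)
    also have "\<dots> = (\<Sum>p\<in>UNIV. Gam d d p x * (\<Sum>e\<in>UNIV. \<Sum>a\<in>UNIV. H e a x * Rm p e c a x))"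
      by (simp add: sum_distrib_left mult_ac)
    finally show ?thesis by (simp add: Z[OF x])
  qed
  have A3e: "A3 = (\<Sum>q\<in>UNIV. H d q x * (\<Sum>p\<in>UNIV. Gam p d c x * ricci g p q x))"
  proof -
    have "A3 = (\<Sum>p\<in>UNIV. \<Sum>a\<in>UNIV. \<Sum>e\<in>UNIV. H e a x * (Gam p d c x * Rm d e p a x))"
      unfolding A3_def by (rule rev3)
    also have "\<dots> = (\<Sum>p\<in>UNIV. \<Sum>e\<in>UNIV. \<Sum>a\<in>UNIV. H e a x * (Gam p d c x * Rm d e p a x))"
      by (rule sum.cong[OF refl], rule sum.swap)
    also have "\<dots> = (\<Sum>p\<in>UNIV. Gam p d c x * (\<Sum>e\<in>UNIV. \<Sum>a\<in>UNIV. H e a x * Rm d e p a x))"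
      by (simp add: sum_distrib_left mult_ac)
    also have "\<dots> = (\<Sum>p\<in>UNIV. \<Sum>q\<in>UNIV. Gam p d c x * (H d q x * ricci g p q x))"
      by (simp add: Z[OF x] sum_distrib_left)
    also have "\<dots> = (\<Sum>q\<in>UNIV. \<Sum>p\<in>UNIV. Gam p d c x * (H d q x * ricci g p q x))"
      by (rule sum.swap)
    finally show ?thesis by (simp add: sum_distrib_left mult_ac)
  qed
  have dHd: "(\<Sum>q\<in>UNIV. partial d (H d q) x * ricci g c q x)
     = - (\<Sum>p\<in>UNIV. Gam d d p x * (\<Sum>q\<in>UNIV. H p q x * ricci g c q x))
       - (\<Sum>q\<in>UNIV. H d q x * (\<Sum>p\<in>UNIV. Gam p d q x * ricci g c p x))"
  proof -
    have "(\<Sum>q\<in>UNIV. partial d (H d q) x * ricci g c q x)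
      = - (\<Sum>q\<in>UNIV. \<Sum>p\<in>UNIV. Gam d d p x * H p q x * ricci g c q x)
        - (\<Sum>q\<in>UNIV. \<Sum>p\<in>UNIV. Gam q d p x * H d p x * ricci g c q x)"
      by (simp add: dH[OF x] ring_distribs sum.distrib sum_subtractf sum_distrib_right sum_negf)
    also have "(\<Sum>q\<in>UNIV. \<Sum>p\<in>UNIV. Gam d d p x * H p q x * ricci g c q x)
        = (\<Sum>p\<in>UNIV. Gam d d p x * (\<Sum>q\<in>UNIV. H p q x * ricci g c q x))"
      by (subst sum.swap) (simp add: sum_distrib_left mult_ac)
    also have "(\<Sum>q\<in>UNIV. \<Sum>p\<in>UNIV. Gam q d p x * H d p x * ricci g c q x)
        = (\<Sum>q\<in>UNIV. H d q x * (\<Sum>p\<in>UNIV. Gam p d q x * ricci g c p x))"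
      by (subst sum.swap) (simp add: sum_distrib_left mult_ac)
    finally show ?thesis .
  qed
  have R: "(\<Sum>q\<in>UNIV. H d q x * cov2 (ricci g) d c q x)
     = (\<Sum>q\<in>UNIV. H d q x * partial d (ricci g c q) x)
       - (\<Sum>q\<in>UNIV. H d q x * (\<Sum>p\<in>UNIV. Gam p d c x * ricci g p q x))
       - (\<Sum>q\<in>UNIV. H d q x * (\<Sum>p\<in>UNIV. Gam p d q x * ricci g c p x))"
    unfolding cov2_def by (simp add: ring_distribs sum.distrib sum_subtractf)
  have ZD': "(\<Sum>e\<in>UNIV. \<Sum>a\<in>UNIV. H e a x * partial d (Rm d e c a) x)
      + (\<Sum>e\<in>UNIV. \<Sum>a\<in>UNIV. partial d (H e a) x * Rm d e c a x)
     = (\<Sum>q\<in>UNIV. H d q x * partial d (ricci g c q) x) + (\<Sum>q\<in>UNIV. partial d (H d q) x * ricci g c q x)"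
    using ZD by (simp add: sum.distrib)
  show ?thesis using L ZD' dHR A1e A3e dHd R by linarith
qed

lemma contracted_bianchi: "x \<in> U \<Longrightarrow>
  2 * (\<Sum>a\<in>UNIV. \<Sum>e\<in>UNIV. H a e x * cov2 (ricci g) a c e x) = (\<Sum>a\<in>UNIV. \<Sum>e\<in>UNIV. H a e x * cov2 (ricci g) c a e x)"
proof -
  assume x: "x \<in> U"
  have b: "(\<Sum>e\<in>UNIV. \<Sum>a\<in>UNIV. H e a x * (\<Sum>d\<in>UNIV. CRm a d e d c x + CRm d d e c a x + CRm c d e a d x)) = 0"
    by (simp add: bianchi2[OF x])
  have "(\<Sum>e\<in>UNIV. \<Sum>a\<in>UNIV. H e a x * (\<Sum>d\<in>UNIV. CRm a d e d c x + CRm d d e c a x + CRm c d e a d x))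
     = (\<Sum>e\<in>UNIV. \<Sum>a\<in>UNIV. H e a x * cov2 (ricci g) a c e x)
     + (\<Sum>e\<in>UNIV. \<Sum>a\<in>UNIV. \<Sum>d\<in>UNIV. H e a x * CRm d d e c a x)
     - (\<Sum>e\<in>UNIV. \<Sum>a\<in>UNIV. H e a x * cov2 (ricci g) c a e x)"
    by (simp add: sum.distrib C1[OF x] C2[OF x] ring_distribs sum_subtractf sum_distrib_left)
  also have "(\<Sum>e\<in>UNIV. \<Sum>a\<in>UNIV. \<Sum>d\<in>UNIV. H e a x * CRm d d e c a x)
      = (\<Sum>d\<in>UNIV. \<Sum>q\<in>UNIV. H d q x * cov2 (ricci g) d c q x)"
  proof -
    have "(\<Sum>e\<in>UNIV. \<Sum>a\<in>UNIV. \<Sum>d\<in>UNIV. H e a x * CRm d d e c a x)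
       = (\<Sum>d\<in>UNIV. \<Sum>a\<in>UNIV. \<Sum>e\<in>UNIV. H e a x * CRm d d e c a x)" by (rule rev3)
    also have "\<dots> = (\<Sum>d\<in>UNIV. \<Sum>e\<in>UNIV. \<Sum>a\<in>UNIV. H e a x * CRm d d e c a x)"
      by (rule sum.cong[OF refl], rule sum.swap)
    also have "\<dots> = (\<Sum>d\<in>UNIV. \<Sum>q\<in>UNIV. H d q x * cov2 (ricci g) d c q x)"
      by (rule sum.cong[OF refl], rule C3[OF x])
    finally show ?thesis .
  qed
  also have "(\<Sum>d\<in>UNIV. \<Sum>q\<in>UNIV. H d q x * cov2 (ricci g) d c q x) = (\<Sum>e\<in>UNIV. \<Sum>a\<in>UNIV. H e a x * cov2 (ricci g) a c e x)"
    by (subst sum.swap) (simp add: ginv_sym[OF x])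
  finally have "2 * (\<Sum>e\<in>UNIV. \<Sum>a\<in>UNIV. H e a x * cov2 (ricci g) a c e x) = (\<Sum>e\<in>UNIV. \<Sum>a\<in>UNIV. H e a x * cov2 (ricci g) c a e x)"
    using b by linarith
  moreover have "(\<Sum>e\<in>UNIV. \<Sum>a\<in>UNIV. H e a x * cov2 (ricci g) a c e x) = (\<Sum>a\<in>UNIV. \<Sum>e\<in>UNIV. H a e x * cov2 (ricci g) a c e x)"
    by (subst sum.swap) (simp add: ginv_sym[OF x])
  moreover have "(\<Sum>e\<in>UNIV. \<Sum>a\<in>UNIV. H e a x * cov2 (ricci g) c a e x) = (\<Sum>a\<in>UNIV. \<Sum>e\<in>UNIV. H a e x * cov2 (ricci g) c a e x)"
    by (subst sum.swap) (simp add: ginv_sym[OF x])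
  ultimately show ?thesis by simp
qed

end

locale qe = rmetric U g for U :: "(real^'d::finite) set" and g +
  fixes V :: "'d \<Rightarrow> real^'d \<Rightarrow> real" and m lam rho :: real
  assumes cqe: "closed_qe U g V m lam rho"
begin

abbreviation W where "W \<equiv> flat g V"

lemma V_SC: "V k \<in> SC U"
  using cqe unfolding closed_qe_def quasi_einstein_def by (blast intro: SC.base)

lemma m_pos: "m > 0"
  using cqe unfolding closed_qe_def quasi_einstein_def by blast

lemma qe_eq: "x \<in> U \<Longrightarrow> (1/2) * lie_metric g V i j x + ricci g i j x - (1/m) * W i x * W j x
                   = (lam + rho * scalar_curv g x) * g i j x"
  using cqe unfolding closed_qe_def quasi_einstein_def by blast

lemma closedW: "x \<in> U \<Longrightarrow> partial i (W j) x = partial j (W i) x"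
  using cqe unfolding closed_qe_def by blast

lemma W_SC: "W i \<in> SC U"
proof -
  have "(\<lambda>x. \<Sum>k\<in>UNIV. g i k x * V k x) \<in> SC U"
    by (rule SC_sum) (auto intro: SC.mult g_SC V_SC)
  then show ?thesis unfolding flat_def[abs_def] .
qed

lemma pW_SC: "partial a (W i) \<in> SC U" by (rule SC_partial[OF U_open W_SC])

lemma Vup: "x \<in> U \<Longrightarrow> V k x = (\<Sum>l\<in>UNIV. H k l x * W l x)"
proof -
  assume x: "x \<in> U"
  have "(\<Sum>l\<in>UNIV. H k l x * W l x) = (\<Sum>l\<in>UNIV. \<Sum>q\<in>UNIV. H k l x * g l q x * V q x)"
    unfolding flat_def by (simp add: sum_distrib_left mult_ac)
  also have "\<dots> = (\<Sum>q\<in>UNIV. (\<Sum>l\<in>UNIV. H k l x * g l q x) * V q x)"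
    by (subst sum.swap) (simp add: sum_distrib_right)
  also have "\<dots> = V k x" by (simp add: ginv_left[OF x] sum_delta_l)
  finally show ?thesis by simp
qed

definition Dm :: "'d \<Rightarrow> 'd \<Rightarrow> real^'d \<Rightarrow> real" where
  "Dm i j x = partial i (W j) x - (\<Sum>p\<in>UNIV. Gam p i j x * W p x)"

lemma Dm_SC: "Dm i j \<in> SC U"
proof -
  have "(\<lambda>x. partial i (W j) x - (\<Sum>p\<in>UNIV. Gam p i j x * W p x)) \<in> SC U"
    by (intro SC_diff' pW_SC SC_sum) (auto intro: SC.mult Gam_SC W_SC)
  then show ?thesis unfolding Dm_def[abs_def] .
qed

lemma Dm_sym: "x \<in> U \<Longrightarrow> Dm i j x = Dm j i x"
  unfolding Dm_def by (simp add: closedW Gam_sym[of _ i j])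

lemma lie_Dm: "x \<in> U \<Longrightarrow> (1/2) * lie_metric g V i j x = Dm i j x"
proof -
  assume x: "x \<in> U"
  have dW: "partial i (W j) x = (\<Sum>k\<in>UNIV. g j k x * partial i (V k) x + partial i (g j k) x * V k x)" for i j
    unfolding flat_def[abs_def]
    by (simp add: partial_sum partial_mult dfx[OF g_SC x] dfx[OF V_SC x])
  have GV: "(\<Sum>k\<in>UNIV. V k x * Gl k i j x) = (\<Sum>p\<in>UNIV. Gam p i j x * W p x)"
  proof -
    have "(\<Sum>k\<in>UNIV. V k x * Gl k i j x) = (\<Sum>k\<in>UNIV. \<Sum>l\<in>UNIV. H k l x * W l x * Gl k i j x)"
      by (simp add: Vup[OF x] sum_distrib_right)
    also have "\<dots> = (\<Sum>l\<in>UNIV. (\<Sum>k\<in>UNIV. H l k x * Gl k i j x) * W l x)"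
      by (subst sum.swap) (simp add: sum_distrib_right sum_distrib_left ginv_sym[OF x, of _ l for l] mult_ac)
    also have "\<dots> = (\<Sum>p\<in>UNIV. Gam p i j x * W p x)" by (simp add: Gam_Gl sum_distrib_left sum_distrib_right mult_ac)
    finally show ?thesis .
  qed
  have "lie_metric g V i j x = partial i (W j) x + partial j (W i) x - 2 * (\<Sum>k\<in>UNIV. V k x * Gl k i j x)"
    unfolding lie_metric_def dW Gl_def
    by (simp add: sum.distrib sum_subtractf sum_distrib_left algebra_simps g_sym[of _ i] g_sym[of _ j])
  then show ?thesis using closedW[OF x, of i j] GV unfolding Dm_def by simp
qed

end

context qe
begin

lemma dDm: "x \<in> U \<Longrightarrow> partial a (Dm j i) x = partial a (partial j (W i)) x
   - (\<Sum>q\<in>UNIV. Gam q j i x * partial a (W q) x) - (\<Sum>q\<in>UNIV. partial a (Gam q j i) x * W q x)"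
  unfolding Dm_def[abs_def]
  by (simp add: partial_diff partial_sum partial_mult diffs dfx[OF pW_SC] dfx[OF W_SC] sum.distrib)

lemma ricci_id_pt: "x \<in> U \<Longrightarrow> cov2 Dm a j i x - cov2 Dm j a i x = - (\<Sum>q\<in>UNIV. Rm q i a j x * W q x)"
proof -
  assume x: "x \<in> U"
  have sw: "partial a (partial j (W i)) x = partial j (partial a (W i)) x"
    by (rule schwarz[OF U_open x SC_smooth[OF U_open W_SC]])
  have e1: "(\<Sum>p\<in>UNIV. Gam p a i x * Dm j p x) = (\<Sum>p\<in>UNIV. Gam p a i x * partial j (W p) x)
      - (\<Sum>p\<in>UNIV. \<Sum>q\<in>UNIV. Gam p a i x * Gam q j p x * W q x)"
    unfolding Dm_def by (simp add: ring_distribs sum_subtractf sum_distrib_left mult_ac)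
  have e2: "(\<Sum>p\<in>UNIV. Gam p j i x * Dm a p x) = (\<Sum>p\<in>UNIV. Gam p j i x * partial a (W p) x)
      - (\<Sum>p\<in>UNIV. \<Sum>q\<in>UNIV. Gam p j i x * Gam q a p x * W q x)"
    unfolding Dm_def by (simp add: ring_distribs sum_subtractf sum_distrib_left mult_ac)
  have e3: "(\<Sum>p\<in>UNIV. Gam p a j x * Dm p i x) = (\<Sum>p\<in>UNIV. Gam p j a x * Dm p i x)"
    by (simp add: Gam_sym[of _ a j])
  have e4: "(\<Sum>q\<in>UNIV. Rm q i a j x * W q x) = (\<Sum>q\<in>UNIV. partial a (Gam q j i) x * W q x)
      - (\<Sum>q\<in>UNIV. partial j (Gam q a i) x * W q x)
      + (\<Sum>p\<in>UNIV. \<Sum>q\<in>UNIV. Gam p j i x * Gam q a p x * W q x)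
      - (\<Sum>p\<in>UNIV. \<Sum>q\<in>UNIV. Gam p a i x * Gam q j p x * W q x)"
  proof -
    have "(\<Sum>q\<in>UNIV. Rm q i a j x * W q x) = (\<Sum>q\<in>UNIV. partial a (Gam q j i) x * W q x)
      - (\<Sum>q\<in>UNIV. partial j (Gam q a i) x * W q x)
      + (\<Sum>q\<in>UNIV. \<Sum>p\<in>UNIV. Gam q a p x * Gam p j i x * W q x)
      - (\<Sum>q\<in>UNIV. \<Sum>p\<in>UNIV. Gam q j p x * Gam p a i x * W q x)"
      unfolding Rm_def by (simp add: ring_distribs sum.distrib sum_subtractf sum_distrib_right)
    also have "(\<Sum>q\<in>UNIV. \<Sum>p\<in>UNIV. Gam q a p x * Gam p j i x * W q x) = (\<Sum>p\<in>UNIV. \<Sum>q\<in>UNIV. Gam p j i x * Gam q a p x * W q x)"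
      by (subst sum.swap) (simp add: mult_ac)
    also have "(\<Sum>q\<in>UNIV. \<Sum>p\<in>UNIV. Gam q j p x * Gam p a i x * W q x) = (\<Sum>p\<in>UNIV. \<Sum>q\<in>UNIV. Gam p a i x * Gam q j p x * W q x)"
      by (subst sum.swap) (simp add: mult_ac)
    finally show ?thesis .
  qed
  show ?thesis
    unfolding cov2_def
    using dDm[OF x, of a j i] dDm[OF x, of j a i] sw e1 e2 e3 e4 by linarith
qed

lemma ricci_identity: "x \<in> U \<Longrightarrow>
  (\<Sum>a\<in>UNIV. \<Sum>i\<in>UNIV. H a i x * cov2 Dm a i j x) - (\<Sum>a\<in>UNIV. \<Sum>i\<in>UNIV. H a i x * cov2 Dm j a i x)
  = (\<Sum>k\<in>UNIV. ricci g j k x * V k x)"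
proof -
  assume x: "x \<in> U"
  have symc: "cov2 Dm a i j x = cov2 Dm a j i x" for a i j
  proof -
    have "partial a (Dm i j) x = partial a (Dm j i) x"
      by (rule partial_cong[OF U_open x]) (simp add: Dm_sym)
    then show ?thesis unfolding cov2_def using Dm_sym[OF x] by (simp add: add_ac)
  qed
  have "(\<Sum>a\<in>UNIV. \<Sum>i\<in>UNIV. H a i x * cov2 Dm a i j x) - (\<Sum>a\<in>UNIV. \<Sum>i\<in>UNIV. H a i x * cov2 Dm j a i x)
      = (\<Sum>a\<in>UNIV. \<Sum>i\<in>UNIV. H a i x * (cov2 Dm a j i x - cov2 Dm j a i x))"
    by (simp add: symc ring_distribs sum_subtractf)
  also have "\<dots> = (\<Sum>a\<in>UNIV. \<Sum>i\<in>UNIV. \<Sum>q\<in>UNIV. W q x * (H i a x * Rm q i j a x))"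
    by (simp add: ricci_id_pt[OF x] sum_distrib_left sum_negf[symmetric] Rm_anti[of _ _ a j for a] ginv_sym[OF x, of a i for a i] mult_ac)
  also have "\<dots> = (\<Sum>q\<in>UNIV. W q x * (\<Sum>i\<in>UNIV. \<Sum>a\<in>UNIV. H i a x * Rm q i j a x))"
  proof -
    have "(\<Sum>a\<in>UNIV. \<Sum>i\<in>UNIV. \<Sum>q\<in>UNIV. W q x * (H i a x * Rm q i j a x))
        = (\<Sum>q\<in>UNIV. \<Sum>i\<in>UNIV. \<Sum>a\<in>UNIV. W q x * (H i a x * Rm q i j a x))" by (rule rev3)
    then show ?thesis by (simp add: sum_distrib_left)
  qed
  also have "\<dots> = (\<Sum>q\<in>UNIV. \<Sum>p\<in>UNIV. W q x * (H q p x * ricci g j p x))"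
    by (simp add: Z[OF x] sum_distrib_left)
  also have "\<dots> = (\<Sum>p\<in>UNIV. ricci g j p x * (\<Sum>q\<in>UNIV. H p q x * W q x))"
    by (subst sum.swap) (simp add: sum_distrib_left ginv_sym[OF x, of q p for q p] mult_ac)
  also have "\<dots> = (\<Sum>k\<in>UNIV. ricci g j k x * V k x)" by (simp add: Vup[OF x])
  finally show ?thesis .
qed

end

context rmetric
begin

lemma r_fun: "scalar_curv g = (\<lambda>y. \<Sum>a\<in>UNIV. \<Sum>e\<in>UNIV. H a e y * ricci g a e y)"
  by (rule ext) (simp add: scalar_curv_def)

lemma r_SC: "scalar_curv g \<in> SC U"
  unfolding r_fun by (intro SC_sum) (auto intro: SC.mult H_SC ricci_SC)

lemma cov2_sym:
  assumes x: "x \<in> U" and s: "\<And>i j y. y \<in> U \<Longrightarrow> T i j y = T j i y"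
  shows "cov2 T a i j x = cov2 T a j i x"
proof -
  have "partial a (T i j) x = partial a (T j i) x"
    by (rule partial_cong[OF U_open x]) (simp add: s)
  then show ?thesis unfolding cov2_def using s[OF x] by (simp add: add_ac)
qed

lemma cov2_lin:
  assumes x: "x \<in> U" and sc: "\<And>i j. A i j \<in> SC U" "\<And>i j. B i j \<in> SC U" "\<And>i j. C i j \<in> SC U" "\<And>i j. E i j \<in> SC U"
  shows "cov2 (\<lambda>i j y. A i j y + B i j y - c * C i j y - E i j y) a i j x
     = cov2 A a i j x + cov2 B a i j x - c * cov2 C a i j x - cov2 E a i j x"
proof -
  have d: "A i j differentiable (at x)" "B i j differentiable (at x)" "C i j differentiable (at x)" "E i j differentiable (at x)" for i j
    using dfx[OF sc(1) x] dfx[OF sc(2) x] dfx[OF sc(3) x] dfx[OF sc(4) x] by auto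
  have "partial a (\<lambda>y. A i j y + B i j y - c * C i j y - E i j y) x
     = partial a (A i j) x + partial a (B i j) x - c * partial a (C i j) x - partial a (E i j) x"
    by (simp add: partial_add partial_diff partial_cmult d)
  then show ?thesis unfolding cov2_def
    by (simp add: ring_distribs sum.distrib sum_subtractf sum_distrib_left algebra_simps)
qed

end

context qe
begin

definition fq where "fq y = lam + rho * scalar_curv g y"

lemma ric_expr: "x \<in> U \<Longrightarrow> ricci g i j x = fq x * g i j x - Dm i j x + (1/m) * (W i x * W j x)"
  using qe_eq[of x i j] lie_Dm[of x i j] unfolding fq_def by (simp add: algebra_simps)

lemma ric_sym: "x \<in> U \<Longrightarrow> ricci g i j x = ricci g j i x"
  by (simp add: ric_expr Dm_sym g_sym[of i j] mult.commute)

definition Ef where "Ef i j y = Dm i j y + ricci g i j y - (1/m) * (W i y * W j y) - fq y * g i j y"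

lemma Ef_zero: "y \<in> U \<Longrightarrow> Ef i j y = 0"
  unfolding Ef_def by (simp add: ric_expr)

lemma cov2_Ef_zero: "x \<in> U \<Longrightarrow> cov2 Ef a i j x = 0"
proof -
  assume x: "x \<in> U"
  have "partial a (Ef i j) x = partial a (\<lambda>y. 0) x"
    by (rule partial_cong[OF U_open x]) (simp add: Ef_zero)
  then show ?thesis unfolding cov2_def by (simp add: partial_const Ef_zero[OF x])
qed

lemma fq_SC: "fq \<in> SC U"
  unfolding fq_def[abs_def] by (intro SC.add SC.mult SC.const r_SC)

lemma cov2_Ef: "x \<in> U \<Longrightarrow> cov2 Ef a i j x
   = cov2 Dm a i j x + cov2 (ricci g) a i j x - (1/m) * cov2 (\<lambda>i j y. W i y * W j y) a i j x
     - cov2 (\<lambda>i j y. fq y * g i j y) a i j x"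
proof -
  assume x: "x \<in> U"
  have "Ef = (\<lambda>i j y. Dm i j y + ricci g i j y - (1/m) * (W i y * W j y) - fq y * g i j y)"
    by (intro ext) (simp add: Ef_def)
  then show ?thesis
    by (simp only:) (rule cov2_lin[OF x], auto intro: Dm_SC ricci_SC SC.mult W_SC fq_SC g_SC)
qed

lemma cov2_WW: "x \<in> U \<Longrightarrow> cov2 (\<lambda>i j y. W i y * W j y) a i j x = Dm a i x * W j x + W i x * Dm a j x"
  unfolding cov2_def Dm_def
  by (simp add: partial_mult dfx[OF W_SC] ring_distribs sum_distrib_left sum_distrib_right algebra_simps)

lemma cov2_FG: "x \<in> U \<Longrightarrow> cov2 (\<lambda>i j y. fq y * g i j y) a i j x = rho * partial a (scalar_curv g) x * g i j x"
proof -
  assume x: "x \<in> U"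
  have pf: "partial a fq x = rho * partial a (scalar_curv g) x"
    unfolding fq_def[abs_def] by (simp add: partial_add partial_cmult partial_const dfx[OF r_SC x])
  have "cov2 (\<lambda>i j y. fq y * g i j y) a i j x
     = fq x * (partial a (g i j) x - (\<Sum>p\<in>UNIV. Gam p a i x * g p j x) - (\<Sum>p\<in>UNIV. Gam p a j x * g i p x))
       + partial a fq x * g i j x"
    unfolding cov2_def
    by (simp add: partial_mult dfx[OF fq_SC x] dfx[OF g_SC x] ring_distribs sum_distrib_left algebra_simps)
  also have "\<dots> = rho * partial a (scalar_curv g) x * g i j x"
    by (simp add: metric_compat[OF x] pf)
  finally show ?thesis .
qed

end

lemma dsum_lin4: "(\<Sum>a\<in>UNIV. \<Sum>i\<in>UNIV. P a i + Q a i - c * R a i - S a i)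
  = (\<Sum>a\<in>UNIV. \<Sum>i\<in>UNIV. P a i) + (\<Sum>a\<in>UNIV. \<Sum>i\<in>UNIV. Q a i) - c * (\<Sum>a\<in>UNIV. \<Sum>i\<in>UNIV. R a i)
    - (\<Sum>a\<in>UNIV. \<Sum>i\<in>UNIV. (S a i :: real))"
  by (simp add: sum.distrib sum_subtractf sum_distrib_left)

lemma sum_lin4: "(\<Sum>a\<in>UNIV. P a + Q a - c * R a - S a)
  = (\<Sum>a\<in>UNIV. P a) + (\<Sum>a\<in>UNIV. Q a) - c * (\<Sum>a\<in>UNIV. R a) - (\<Sum>a\<in>UNIV. (S a :: real))"
  by (simp add: sum.distrib sum_subtractf sum_distrib_left)

context qe
begin

definition "trD x = (\<Sum>a\<in>UNIV. \<Sum>i\<in>UNIV. H a i x * Dm a i x)"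
definition "VD j x = (\<Sum>a\<in>UNIV. V a x * Dm a j x)"
definition "NN x = (\<Sum>a\<in>UNIV. V a x * W a x)"
definition "RicV j x = (\<Sum>k\<in>UNIV. ricci g j k x * V k x)"
definition "divD j x = (\<Sum>a\<in>UNIV. \<Sum>i\<in>UNIV. H a i x * cov2 Dm a i j x)"
definition "trcD j x = (\<Sum>a\<in>UNIV. \<Sum>i\<in>UNIV. H a i x * cov2 Dm j a i x)"
definition "divR j x = (\<Sum>a\<in>UNIV. \<Sum>i\<in>UNIV. H a i x * cov2 (ricci g) a i j x)"
definition "trcR j x = (\<Sum>a\<in>UNIV. \<Sum>i\<in>UNIV. H a i x * cov2 (ricci g) j a i x)"

lemma HW: "x \<in> U \<Longrightarrow> (\<Sum>i\<in>UNIV. H a i x * W i x) = V a x"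
  by (simp add: Vup)

lemma eqI: "x \<in> U \<Longrightarrow> divD j x + divR j x - (1/m) * (trD x * W j x + VD j x) - rho * partial j (scalar_curv g) x = 0"
proof -
  assume x: "x \<in> U"
  have "0 = (\<Sum>a\<in>UNIV. \<Sum>i\<in>UNIV. H a i x * cov2 Ef a i j x)" by (simp add: cov2_Ef_zero[OF x])
  also have "\<dots> = (\<Sum>a\<in>UNIV. \<Sum>i\<in>UNIV. H a i x * cov2 Dm a i j x + H a i x * cov2 (ricci g) a i j x
        - (1/m) * (H a i x * (Dm a i x * W j x + W i x * Dm a j x)) - H a i x * (rho * partial a (scalar_curv g) x * g i j x))"
    by (intro sum.cong refl) (simp only: cov2_Ef[OF x] cov2_WW[OF x] cov2_FG[OF x], simp add: algebra_simps)
  also have "\<dots> = divD j x + divR j x - (1/m) * (\<Sum>a\<in>UNIV. \<Sum>i\<in>UNIV. H a i x * (Dm a i x * W j x + W i x * Dm a j x))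
        - (\<Sum>a\<in>UNIV. \<Sum>i\<in>UNIV. H a i x * (rho * partial a (scalar_curv g) x * g i j x))"
    unfolding divD_def divR_def by (rule dsum_lin4)
  also have "(\<Sum>a\<in>UNIV. \<Sum>i\<in>UNIV. H a i x * (Dm a i x * W j x + W i x * Dm a j x)) = trD x * W j x + VD j x"
  proof -
    have "(\<Sum>a\<in>UNIV. \<Sum>i\<in>UNIV. H a i x * (Dm a i x * W j x + W i x * Dm a j x))
       = (\<Sum>a\<in>UNIV. \<Sum>i\<in>UNIV. H a i x * Dm a i x) * W j x + (\<Sum>a\<in>UNIV. (\<Sum>i\<in>UNIV. H a i x * W i x) * Dm a j x)"
      by (simp add: ring_distribs sum.distrib sum_distrib_right sum_distrib_left mult_ac)
    then show ?thesis by (simp add: HW[OF x] trD_def VD_def)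
  qed
  also have "(\<Sum>a\<in>UNIV. \<Sum>i\<in>UNIV. H a i x * (rho * partial a (scalar_curv g) x * g i j x)) = rho * partial j (scalar_curv g) x"
  proof -
    have "(\<Sum>a\<in>UNIV. \<Sum>i\<in>UNIV. H a i x * (rho * partial a (scalar_curv g) x * g i j x))
       = (\<Sum>a\<in>UNIV. rho * partial a (scalar_curv g) x * (\<Sum>i\<in>UNIV. H a i x * g i j x))"
      by (simp add: sum_distrib_left mult_ac)
    then show ?thesis by (simp add: ginv_left[OF x] sum_delta_r)
  qed
  finally show ?thesis by simp
qed

lemma sumHg: "x \<in> U \<Longrightarrow> (\<Sum>a\<in>UNIV. \<Sum>i\<in>UNIV. H a i x * g a i x) = real CARD('d)"
proof -
  assume x: "x \<in> U"
  have "(\<Sum>a\<in>UNIV. \<Sum>i\<in>UNIV. H a i x * g a i x) = (\<Sum>a\<in>UNIV. \<Sum>i\<in>UNIV. H a i x * g i a x)"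
    by (simp add: g_sym[of _ a for a])
  also have "\<dots> = (\<Sum>a\<in>(UNIV::'d set). 1)" by (simp add: ginv_left[OF x])
  finally show ?thesis by simp
qed

lemma eqII: "x \<in> U \<Longrightarrow> trcD j x + trcR j x - (1/m) * (2 * VD j x) - rho * partial j (scalar_curv g) x * real CARD('d) = 0"
proof -
  assume x: "x \<in> U"
  have "0 = (\<Sum>a\<in>UNIV. \<Sum>i\<in>UNIV. H a i x * cov2 Ef j a i x)" by (simp add: cov2_Ef_zero[OF x])
  also have "\<dots> = (\<Sum>a\<in>UNIV. \<Sum>i\<in>UNIV. H a i x * cov2 Dm j a i x + H a i x * cov2 (ricci g) j a i x
        - (1/m) * (H a i x * (Dm j a x * W i x + W a x * Dm j i x)) - H a i x * (rho * partial j (scalar_curv g) x * g a i x))"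
    by (intro sum.cong refl) (simp only: cov2_Ef[OF x] cov2_WW[OF x] cov2_FG[OF x], simp add: algebra_simps)
  also have "\<dots> = trcD j x + trcR j x - (1/m) * (\<Sum>a\<in>UNIV. \<Sum>i\<in>UNIV. H a i x * (Dm j a x * W i x + W a x * Dm j i x))
        - (\<Sum>a\<in>UNIV. \<Sum>i\<in>UNIV. H a i x * (rho * partial j (scalar_curv g) x * g a i x))"
    unfolding trcD_def trcR_def by (rule dsum_lin4)
  also have "(\<Sum>a\<in>UNIV. \<Sum>i\<in>UNIV. H a i x * (Dm j a x * W i x + W a x * Dm j i x)) = 2 * VD j x"
  proof -
    have "(\<Sum>a\<in>UNIV. \<Sum>i\<in>UNIV. H a i x * (Dm j a x * W i x + W a x * Dm j i x))
       = (\<Sum>a\<in>UNIV. (\<Sum>i\<in>UNIV. H a i x * W i x) * Dm j a x) + (\<Sum>a\<in>UNIV. \<Sum>i\<in>UNIV. H a i x * W a x * Dm j i x)"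
      by (simp add: ring_distribs sum.distrib sum_distrib_right sum_distrib_left mult_ac)
    also have "(\<Sum>a\<in>UNIV. \<Sum>i\<in>UNIV. H a i x * W a x * Dm j i x) = (\<Sum>i\<in>UNIV. (\<Sum>a\<in>UNIV. H i a x * W a x) * Dm j i x)"
      by (subst sum.swap) (simp add: sum_distrib_right ginv_sym[OF x, of _ i for i])
    also have "(\<Sum>a\<in>UNIV. (\<Sum>i\<in>UNIV. H a i x * W i x) * Dm j a x) + (\<Sum>i\<in>UNIV. (\<Sum>a\<in>UNIV. H i a x * W a x) * Dm j i x)
        = (\<Sum>a\<in>UNIV. V a x * Dm a j x) + (\<Sum>i\<in>UNIV. V i x * Dm i j x)"
      by (simp only: HW[OF x] Dm_sym[OF x, of j])
    also have "\<dots> = 2 * VD j x" by (simp add: VD_def)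
    finally show ?thesis .
  qed
  also have "(\<Sum>a\<in>UNIV. \<Sum>i\<in>UNIV. H a i x * (rho * partial j (scalar_curv g) x * g a i x))
      = rho * partial j (scalar_curv g) x * real CARD('d)"
  proof -
    have "(\<Sum>a\<in>UNIV. \<Sum>i\<in>UNIV. H a i x * (rho * partial j (scalar_curv g) x * g a i x))
       = rho * partial j (scalar_curv g) x * (\<Sum>a\<in>UNIV. \<Sum>i\<in>UNIV. H a i x * g a i x)"
      by (simp add: sum_distrib_left mult_ac)
    then show ?thesis by (simp add: sumHg[OF x])
  qed
  finally show ?thesis by simp
qed

lemma eqTr: "x \<in> U \<Longrightarrow> trcR j x = partial j (scalar_curv g) x"
  unfolding trcR_def r_fun
  by (rule trace_lemma[symmetric, OF _ ricci_SC])

lemma eqB: "x \<in> U \<Longrightarrow> 2 * divR j x = trcR j x"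
proof -
  assume x: "x \<in> U"
  have "divR j x = (\<Sum>a\<in>UNIV. \<Sum>e\<in>UNIV. H a e x * cov2 (ricci g) a j e x)"
    unfolding divR_def by (intro sum.cong refl) (simp add: cov2_sym[OF x ric_sym])
  then show ?thesis unfolding trcR_def by (simp add: contracted_bianchi[OF x])
qed

lemma eqRI: "x \<in> U \<Longrightarrow> divD j x - trcD j x = RicV j x"
  unfolding divD_def trcD_def RicV_def by (rule ricci_identity)

lemma eqIII: "x \<in> U \<Longrightarrow> VD j x + RicV j x - (1/m) * NN x * W j x - fq x * W j x = 0"
proof -
  assume x: "x \<in> U"
  have "0 = (\<Sum>a\<in>UNIV. V a x * Ef a j x)" by (simp add: Ef_zero[OF x])
  also have "\<dots> = (\<Sum>a\<in>UNIV. V a x * Dm a j x + V a x * ricci g a j x - (1/m) * (V a x * W a x * W j x) - fq x * (g j a x * V a x))"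
    by (intro sum.cong refl) (simp add: Ef_def g_sym[of _ j] algebra_simps)
  also have "\<dots> = (\<Sum>a\<in>UNIV. V a x * Dm a j x) + (\<Sum>a\<in>UNIV. V a x * ricci g a j x) - (1/m) * (\<Sum>a\<in>UNIV. V a x * W a x * W j x)
       - (\<Sum>a\<in>UNIV. fq x * (g j a x * V a x))"
    by (rule sum_lin4)
  also have "(\<Sum>a\<in>UNIV. V a x * ricci g a j x) = RicV j x"
    unfolding RicV_def by (intro sum.cong refl) (simp add: ric_sym[OF x, of _ j])
  also have "(\<Sum>a\<in>UNIV. V a x * W a x * W j x) = NN x * W j x"
    unfolding NN_def by (simp add: sum_distrib_right)
  also have "(\<Sum>a\<in>UNIV. fq x * (g j a x * V a x)) = fq x * W j x"
    unfolding flat_def by (simp add: sum_distrib_left)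
  finally show ?thesis by (simp add: VD_def)
qed

lemma eqIV: "x \<in> U \<Longrightarrow> trD x + scalar_curv g x - (1/m) * NN x - fq x * real CARD('d) = 0"
proof -
  assume x: "x \<in> U"
  have "0 = (\<Sum>a\<in>UNIV. \<Sum>i\<in>UNIV. H a i x * Ef a i x)" by (simp add: Ef_zero[OF x])
  also have "\<dots> = (\<Sum>a\<in>UNIV. \<Sum>i\<in>UNIV. H a i x * Dm a i x + H a i x * ricci g a i x
        - (1/m) * (H a i x * (W a x * W i x)) - H a i x * (fq x * g a i x))"
    by (intro sum.cong refl) (simp add: Ef_def algebra_simps)
  also have "\<dots> = trD x + scalar_curv g x - (1/m) * (\<Sum>a\<in>UNIV. \<Sum>i\<in>UNIV. H a i x * (W a x * W i x))
        - (\<Sum>a\<in>UNIV. \<Sum>i\<in>UNIV. H a i x * (fq x * g a i x))"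
    unfolding trD_def scalar_curv_def by (rule dsum_lin4)
  also have "(\<Sum>a\<in>UNIV. \<Sum>i\<in>UNIV. H a i x * (W a x * W i x)) = NN x"
  proof -
    have "(\<Sum>a\<in>UNIV. \<Sum>i\<in>UNIV. H a i x * (W a x * W i x)) = (\<Sum>a\<in>UNIV. W a x * (\<Sum>i\<in>UNIV. H a i x * W i x))"
      by (simp add: sum_distrib_left mult_ac)
    also have "\<dots> = (\<Sum>a\<in>UNIV. W a x * V a x)" by (simp only: HW[OF x])
    finally show ?thesis by (simp add: NN_def mult.commute)
  qed
  also have "(\<Sum>a\<in>UNIV. \<Sum>i\<in>UNIV. H a i x * (fq x * g a i x)) = fq x * real CARD('d)"
  proof -
    have "(\<Sum>a\<in>UNIV. \<Sum>i\<in>UNIV. H a i x * (fq x * g a i x)) = fq x * (\<Sum>a\<in>UNIV. \<Sum>i\<in>UNIV. H a i x * g a i x)"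
      by (simp add: sum_distrib_left mult_ac)
    then show ?thesis by (simp add: sumHg[OF x])
  qed
  finally show ?thesis by simp
qed

end

lemma final_algebra:
  fixes RicV dr trD VD divD trcD divR trcR N Wj f r d rho lam m mi n :: real
  assumes mi: "m * mi = 1"
  and I: "divD + divR - mi * (trD * Wj + VD) - rho * dr = 0"
  and II: "trcD + trcR - mi * (2 * VD) - rho * dr * d = 0"
  and RI: "divD - trcD = RicV"
  and B: "2 * divR = trcR" and Tr: "trcR = dr"
  and III: "VD + RicV - mi * N * Wj - f * Wj = 0"
  and IV: "trD + r - mi * N - f * d = 0"
  and fd: "f = lam + rho * r" and dd: "d = 2 * n + 1"
  shows "((m - 1) * mi) * RicV = ((2 * n * lam + r * (2 * n * rho - 1)) * mi) * Wj - ((4 * n * rho - 1) / 2) * dr"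
  using assms by algebra

context qe
begin

lemma per_j:
  assumes x: "x \<in> U" and n: "CARD('d) = 2 * n + 1"
  shows "((m - 1) / m) * RicV j x
    = ((2 * real n * lam + scalar_curv g x * (2 * real n * rho - 1)) / m) * W j x
      - ((4 * real n * rho - 1) / 2) * partial j (scalar_curv g) x"
proof -
  have mi: "m * (1/m) = 1" using m_pos by simp
  have d: "real CARD('d) = 2 * real n + 1" using n by simp
  have "((m - 1) * (1/m)) * RicV j x
    = ((2 * real n * lam + scalar_curv g x * (2 * real n * rho - 1)) * (1/m)) * W j x
      - ((4 * real n * rho - 1) / 2) * partial j (scalar_curv g) x"
    by (rule final_algebra[OF mi eqI[OF x] eqII[OF x] eqRI[OF x] eqB[OF x] eqTr[OF x] eqIII[OF x] eqIV[OF x] fq_def d])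
  then show ?thesis by simp
qed

end

theorem mainTheorem1:
  fixes U :: "(real^'d::finite) set"
    and g :: "'d \<Rightarrow> 'd \<Rightarrow> real^'d \<Rightarrow> real"
    and V X :: "'d \<Rightarrow> real^'d \<Rightarrow> real"
    and m lam rho :: real and n :: nat and x :: "real^'d"
  assumes "CARD('d) = 2 * n + 1"
    and "closed_qe U g V m lam rho"
    and "\<forall>k. smooth_on U (X k)"
    and "x \<in> U"
  shows "((m - 1) / m) * (\<Sum>j\<in>UNIV. \<Sum>k\<in>UNIV. ricci g j k x * V j x * X k x)
       = ((2 * real n * lam + scalar_curv g x * (2 * real n * rho - 1)) / m)
            * (\<Sum>i\<in>UNIV. flat g V i x * X i x)
         - ((4 * real n * rho - 1) / 2) * (\<Sum>i\<in>UNIV. X i x * partial i (scalar_curv g) x)"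
proof -
  have rm: "rmetric U g"
    using assms(2) unfolding rmetric_def closed_qe_def quasi_einstein_def by blast
  interpret q: qe U g V m lam rho
    by (rule qe.intro[OF rm]) (unfold_locales, rule assms(2))
  have x: "x \<in> U" by (rule assms(4))
  have "(\<Sum>j\<in>UNIV. \<Sum>k\<in>UNIV. ricci g j k x * V j x * X k x) = (\<Sum>k\<in>UNIV. \<Sum>j\<in>UNIV. ricci g j k x * V j x * X k x)"
    by (rule sum.swap)
  also have "\<dots> = (\<Sum>k\<in>UNIV. X k x * q.RicV k x)"
    unfolding q.RicV_def by (simp add: sum_distrib_left q.ric_sym[OF x, of _ k for k] mult_ac)
  finally have L: "(\<Sum>j\<in>UNIV. \<Sum>k\<in>UNIV. ricci g j k x * V j x * X k x) = (\<Sum>k\<in>UNIV. X k x * q.RicV k x)" .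
  have "((m - 1) / m) * (\<Sum>k\<in>UNIV. X k x * q.RicV k x) = (\<Sum>k\<in>UNIV. X k x * (((m - 1) / m) * q.RicV k x))"
    by (simp add: sum_distrib_left mult_ac)
  also have "\<dots> = (\<Sum>k\<in>UNIV. X k x * (((2 * real n * lam + scalar_curv g x * (2 * real n * rho - 1)) / m) * flat g V k x
      - ((4 * real n * rho - 1) / 2) * partial k (scalar_curv g) x))"
    by (rule sum.cong[OF refl]) (simp only: q.per_j[OF x assms(1)])
  also have "\<dots> = ((2 * real n * lam + scalar_curv g x * (2 * real n * rho - 1)) / m)
            * (\<Sum>i\<in>UNIV. flat g V i x * X i x)
         - ((4 * real n * rho - 1) / 2) * (\<Sum>i\<in>UNIV. X i x * partial i (scalar_curv g) x)"
  proof -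
    define C1 where "C1 = (2 * real n * lam + scalar_curv g x * (2 * real n * rho - 1)) / m"
    define C2 where "C2 = (4 * real n * rho - 1) / 2"
    have "(\<Sum>k\<in>UNIV. X k x * (C1 * flat g V k x - C2 * partial k (scalar_curv g) x))
        = C1 * (\<Sum>i\<in>UNIV. flat g V i x * X i x) - C2 * (\<Sum>i\<in>UNIV. X i x * partial i (scalar_curv g) x)"
      by (simp add: ring_distribs sum_subtractf sum_distrib_left mult_ac)
    then show ?thesis unfolding C1_def C2_def .
  qed
  finally show ?thesis using L by simp
qed

end
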